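(* Assume $F$ is Myerson-regular, i.e. $v(\theta)=\theta-\frac{1-F(\theta)}{f(\theta)}$ is non-decreasing. For each $m\in[0,\int_0^1x\,\mathrm{d}G(x)]$ there exists $\theta^\star_m\in[0,1]$ such that the expected assignment $x^\star_m(\theta)=0$ for $\theta\in[0,\theta^\star_m)$ and $x^\star_m(\theta)=G^{-1}(F(\theta))$ for $\theta\in[\theta^\star_m,1]$ is induced by a mechanism maximizing aggregate effort $\int_\Theta t(\theta)\,\mathrm{d}F(\theta)$ over all mechanisms satisfying (F1),(F2),(IC),(IR). If $m=\int_0^1x\,\mathrm{d}G(x)$ then $\theta^\star_m=0$. Furthermore, $\theta^\star_m$ is non-increasing in $m$, and constraint (F2) binds whenever $I_{G^{-1}}(F(\theta^\star_0))>-m$.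
   Context: Types $\theta\in[0,1]$ with strictly increasing absolutely continuous CDF $F$ with continuous density $f$; prize qualities in $(0,1]$ with CDF $G$ (quality $0$ is the null prize, unlimited supply). A mechanism $(\Gamma,t)$: $\Gamma(\cdot\mid\theta)$ a CDF on $[0,1]$ for each $\theta$, $t(\theta)\ge0$; $x_\Gamma(\theta)=\int_0^1x\,\mathrm{d}\Gamma(x\mid\theta)$. (F1) $\int\Gamma(x\mid\theta)\,\mathrm{d}F(\theta)\ge G(x)$ for all $x$; (F2) $\int x_\Gamma\,\mathrm{d}F\ge m$; (IC) $\theta x_\Gamma(\theta)-t(\theta)\ge\theta x_\Gamma(\theta')-t(\theta')$; (IR) $\theta x_\Gamma(\theta)-t(\theta)\ge0$. $I_{G^{-1}}(q)=\int_0^qG^{-1}(s)\,\mathrm{d}s-\int_0^1G^{-1}(s)\,\mathrm{d}s$. *)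

theory Defs
  imports "HOL-Analysis.Analysis"
begin

definition cdf01 :: "(real \<Rightarrow> real) \<Rightarrow> bool" where
  "cdf01 H \<longleftrightarrow> mono H \<and> (\<forall>x. continuous (at_right x) H)
      \<and> (\<forall>x<0. H x = 0) \<and> (\<forall>x\<ge>1. H x = 1)"

definition cdf_mean :: "(real \<Rightarrow> real) \<Rightarrow> real" where
  "cdf_mean H = integral\<^sup>L (interval_measure H) (\<lambda>x. x)"

definition type_dist :: "(real \<Rightarrow> real) \<Rightarrow> (real \<Rightarrow> real) \<Rightarrow> bool" where
  "type_dist F f \<longleftrightarrow> F 0 = 0 \<and> F 1 = 1 \<and> strict_mono_on {0..1} F
      \<and> continuous_on {0..1} f \<and> (\<forall>\<theta>\<in>{0..1}. f \<theta> \<ge> 0)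
      \<and> (\<forall>\<theta>\<in>{0..1}. (f has_integral F \<theta>) {0..\<theta>})"

text \<open>Expectation with respect to F: the integral of h dF = integral over [0,1] of h f.\<close>
definition EF :: "(real \<Rightarrow> real) \<Rightarrow> (real \<Rightarrow> real) \<Rightarrow> real" where
  "EF f h = integral {0..1} (\<lambda>\<theta>. f \<theta> * h \<theta>)"

definition EF_ok :: "(real \<Rightarrow> real) \<Rightarrow> (real \<Rightarrow> real) \<Rightarrow> bool" where
  "EF_ok f h \<longleftrightarrow> (\<lambda>\<theta>. f \<theta> * h \<theta>) integrable_on {0..1}"

definition myerson_regular :: "(real \<Rightarrow> real) \<Rightarrow> (real \<Rightarrow> real) \<Rightarrow> bool" where
  "myerson_regular F f \<longleftrightarrow> mono_on {0<..<1} (\<lambda>\<theta>. \<theta> - (1 - F \<theta>) / f \<theta>)"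

definition prize_dist :: "(real \<Rightarrow> real) \<Rightarrow> bool" where
  "prize_dist G \<longleftrightarrow> cdf01 G \<and> G 0 = 0"

definition qinv :: "(real \<Rightarrow> real) \<Rightarrow> real \<Rightarrow> real" where
  "qinv G q = Inf {x\<in>{0..1}. q \<le> G x}"

definition I_Ginv :: "(real \<Rightarrow> real) \<Rightarrow> real \<Rightarrow> real" where
  "I_Ginv G q = integral {0..q} (qinv G) - integral {0..1} (qinv G)"

definition xG :: "(real \<Rightarrow> real \<Rightarrow> real) \<Rightarrow> real \<Rightarrow> real" where
  "xG \<Gamma> \<theta> = cdf_mean (\<Gamma> \<theta>)"

text \<open>Feasible mechanisms: (F1), (F2), (IC), (IR), plus the integrals involved exist.\<close>
definition feasible ::
  "(real \<Rightarrow> real) \<Rightarrow> (real \<Rightarrow> real) \<Rightarrow> real \<Rightarrow> (real \<Rightarrow> real \<Rightarrow> real) \<Rightarrow> (real \<Rightarrow> real) \<Rightarrow> bool" where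
  "feasible f G m \<Gamma> t \<longleftrightarrow>
     (\<forall>\<theta>\<in>{0..1}. cdf01 (\<Gamma> \<theta>) \<and> t \<theta> \<ge> 0)
   \<and> (\<forall>x. EF_ok f (\<lambda>\<theta>. \<Gamma> \<theta> x) \<and> EF f (\<lambda>\<theta>. \<Gamma> \<theta> x) \<ge> G x)
   \<and> EF_ok f (xG \<Gamma>) \<and> EF f (xG \<Gamma>) \<ge> m
   \<and> (\<forall>\<theta>\<in>{0..1}. \<forall>\<theta>'\<in>{0..1}. \<theta> * xG \<Gamma> \<theta> - t \<theta> \<ge> \<theta> * xG \<Gamma> \<theta>' - t \<theta>')
   \<and> (\<forall>\<theta>\<in>{0..1}. \<theta> * xG \<Gamma> \<theta> - t \<theta> \<ge> 0)
   \<and> EF_ok f t"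

definition xstar :: "(real \<Rightarrow> real) \<Rightarrow> (real \<Rightarrow> real) \<Rightarrow> real \<Rightarrow> real \<Rightarrow> real" where
  "xstar F G ts \<theta> = (if \<theta> < ts then 0 else qinv G (F \<theta>))"

end

theory Submission
  imports Defs "HOL-Probability.Probability"
begin
lemma typeD:
  assumes "type_dist F f"
  shows "F 0 = 0" "F 1 = 1" "strict_mono_on {0..1} F" "continuous_on {0..1} f"
    "\<And>\<theta>. \<theta> \<in> {0..1} \<Longrightarrow> f \<theta> \<ge> 0"
    "\<And>\<theta>. \<theta> \<in> {0..1} \<Longrightarrow> (f has_integral F \<theta>) {0..\<theta>}"
  using assms unfolding type_dist_def by auto

lemma F_diff:
  assumes "type_dist F f" "0 \<le> a" "a \<le> b" "b \<le> 1"
  shows "(f has_integral (F b - F a)) {a..b}"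
proof -
  have ib: "(f has_integral F b) {0..b}" and ia: "(f has_integral F a) {0..a}"
    using typeD(6)[OF assms(1)] assms by auto
  have "f integrable_on {a..b}"
    by (rule integrable_subinterval_real[of _ 0 b]) (use ib assms in auto)
  then have "(f has_integral integral {a..b} f) {a..b}" by blast
  from has_integral_combine[OF assms(2,3) ia this] have "(f has_integral (F a + integral {a..b} f)) {0..b}"
    by simp
  then have "F a + integral {a..b} f = F b" using ib has_integral_unique by blast
  then show ?thesis using \<open>(f has_integral integral {a..b} f) {a..b}\<close> by (metis add_diff_cancel_left')
qed

lemma F_mono:
  assumes "type_dist F f" "0 \<le> a" "a \<le> b" "b \<le> 1"
  shows "F a \<le> F b"
proof (cases "a = b")
  case False
  then have "a < b" using assms by simp
  then show ?thesis using strict_mono_onD[OF typeD(3)[OF assms(1)], of a b] assms by simp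
qed simp

lemma F_range:
  assumes "type_dist F f" "0 \<le> a" "a \<le> 1"
  shows "0 \<le> F a" "F a \<le> 1"
  using F_mono[OF assms(1), of 0 a] F_mono[OF assms(1), of a 1] assms typeD[OF assms(1)] by auto

lemma f_bound:
  assumes "type_dist F f"
  obtains M where "M > 0" "\<And>\<theta>. \<theta> \<in> {0..1} \<Longrightarrow> \<bar>f \<theta>\<bar> \<le> M"
proof -
  have "compact (f ` {0..1})" using typeD(4)[OF assms] compact_continuous_image compact_Icc by blast
  then obtain M where "\<forall>y\<in>f ` {0..1}. norm y \<le> M" using compact_imp_bounded bounded_iff by metis
  then have "\<And>\<theta>. \<theta> \<in> {0..1} \<Longrightarrow> \<bar>f \<theta>\<bar> \<le> max M 1"
    by (metis image_eqI real_norm_def max.coboundedI1)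
  then show ?thesis using that[of "max M 1"] by auto
qed

lemma F_lip:
  assumes "type_dist F f" "\<And>\<theta>. \<theta> \<in> {0..1} \<Longrightarrow> \<bar>f \<theta>\<bar> \<le> M" "0 \<le> a" "a \<le> b" "b \<le> 1"
  shows "F b - F a \<le> M * (b - a)"
proof -
  have "integral {a..b} f \<le> integral {a..b} (\<lambda>_. M)"
  proof (rule integral_le)
    show "f integrable_on {a..b}" using F_diff[OF assms(1,3,4,5)] by blast
    show "(\<lambda>_. M) integrable_on {a..b}" by (rule integrable_const_ivl)
    fix x assume "x \<in> {a..b}"
    then have "\<bar>f x\<bar> \<le> M" using assms(2)[of x] assms(3-5) by auto
    then show "f x \<le> M" by simp
  qed
  then show ?thesis using F_diff[OF assms(1,3,4,5)] assms by (simp add: integral_unique mult.commute)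
qed

lemma F_cont:
  assumes "type_dist F f"
  shows "continuous_on {0..1} F"
proof -
  obtain M where M: "M > 0" "\<And>\<theta>. \<theta> \<in> {0..1} \<Longrightarrow> \<bar>f \<theta>\<bar> \<le> M" using f_bound[OF assms] by blast
  have "\<bar>F y - F x\<bar> \<le> M * \<bar>y - x\<bar>" if "x \<in> {0..1}" "y \<in> {0..1}" for x y
  proof (cases "x \<le> y")
    case True
    then show ?thesis using F_lip[OF assms M(2), of x y] F_mono[OF assms, of x y] that by auto
  next
    case False
    then show ?thesis using F_lip[OF assms M(2), of y x] F_mono[OF assms, of y x] that by auto
  qed
  note L = this
  show ?thesis
    unfolding continuous_on_iff dist_real_def
  proof (intro ballI allI impI)
    fix x e :: real assume x: "x \<in> {0..1}" and e: "e > 0"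
    show "\<exists>d>0. \<forall>x'\<in>{0..1}. \<bar>x' - x\<bar> < d \<longrightarrow> \<bar>F x' - F x\<bar> < e"
    proof (intro exI[of _ "e / M"] conjI ballI impI)
      show "e / M > 0" using e M(1) by simp
      fix y assume y: "y \<in> {0..1}" "\<bar>y - x\<bar> < e / M"
      have "M * \<bar>y - x\<bar> < e" using y(2) M(1) by (simp add: pos_less_divide_eq mult.commute)
      then show "\<bar>F y - F x\<bar> < e" using L[OF x y(1)] by linarith
    qed
  qed
qed

lemma F_surj:
  assumes "type_dist F f" "0 \<le> y" "y \<le> 1"
  obtains c where "c \<in> {0..1}" "F c = y"
  using IVT'[of F 0 y 1] F_cont[OF assms(1)] typeD(1,2)[OF assms(1)] assms by auto

lemma F_less_iff:
  assumes "type_dist F f" "a \<in> {0..1}" "b \<in> {0..1}"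
  shows "F a < F b \<longleftrightarrow> a < b" "F a \<le> F b \<longleftrightarrow> a \<le> b"
proof -
  have *: "\<And>x y. x \<in> {0..1} \<Longrightarrow> y \<in> {0..1} \<Longrightarrow> x < y \<Longrightarrow> F x < F y"
    using strict_mono_onD[OF typeD(3)[OF assms(1)]] by blast
  show "F a < F b \<longleftrightarrow> a < b"
    using *[of a b] *[of b a] assms(2,3) by (cases a b rule: linorder_cases) auto
  show "F a \<le> F b \<longleftrightarrow> a \<le> b"
    using *[of a b] *[of b a] assms(2,3) by (cases a b rule: linorder_cases) auto
qed

lemma f_pos:
  assumes td: "type_dist F f" and mr: "myerson_regular F f" and th: "\<theta>0 \<in> {0<..<1}"
  shows "f \<theta>0 > 0"
proof (rule ccontr)
  assume "\<not> f \<theta>0 > 0"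
  then have f0: "f \<theta>0 = 0" using typeD(5)[OF td, of \<theta>0] th by auto
  define \<theta>1 where "\<theta>1 = (\<theta>0 + 1) / 2"
  have th1: "\<theta>0 < \<theta>1" "\<theta>1 < 1" using th by (auto simp: \<theta>1_def)
  define c where "c = 1 - F \<theta>1"
  have "F \<theta>1 < F 1" using F_less_iff(1)[OF td, of \<theta>1 1] th th1 by auto
  then have c: "c > 0" using typeD(2)[OF td] by (simp add: c_def)
  have "continuous (at \<theta>0 within {0..1}) f" using typeD(4)[OF td] th
    by (simp add: continuous_on_eq_continuous_within)
  then obtain d where d: "d > 0" "\<And>y. y \<in> {0..1} \<Longrightarrow> \<bar>y - \<theta>0\<bar> < d \<Longrightarrow> \<bar>f y - f \<theta>0\<bar> < c"
    using c unfolding continuous_within_eps_delta dist_real_def by metis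
  define \<theta>2 where "\<theta>2 = min (\<theta>0 + d/2) \<theta>1"
  have th2: "\<theta>0 < \<theta>2" "\<theta>2 \<le> \<theta>1" "\<theta>2 - \<theta>0 < d" using d th1 by (auto simp: \<theta>2_def)
  have "\<exists>y\<in>{\<theta>0..\<theta>2}. f y > 0"
  proof (rule ccontr)
    assume "\<not> ?thesis"
    then have z: "\<And>y. y \<in> {\<theta>0..\<theta>2} \<Longrightarrow> f y = 0"
    proof -
      fix y assume a: "\<not> (\<exists>y\<in>{\<theta>0..\<theta>2}. f y > 0)" "y \<in> {\<theta>0..\<theta>2}"
      then have "y \<in> {0..1}" using th th2 th1 by auto
      then have "f y \<ge> 0" using typeD(5)[OF td] by blast
      then show "f y = 0" using a by force
    qed
    have "(f has_integral (F \<theta>2 - F \<theta>0)) {\<theta>0..\<theta>2}" using F_diff[OF td] th th2 th1 by auto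
    moreover have "(f has_integral 0) {\<theta>0..\<theta>2}"
      using z by (intro has_integral_is_0) auto
    ultimately have "F \<theta>2 - F \<theta>0 = 0" by (rule has_integral_unique)
    then have "F \<theta>2 = F \<theta>0" by simp
    then show False using F_less_iff(1)[OF td, of \<theta>0 \<theta>2] th th2 th1 by auto
  qed
  then obtain y where y: "y \<in> {\<theta>0..\<theta>2}" "f y > 0" by blast
  then have y0: "y \<noteq> \<theta>0" using f0 by auto
  have yin: "y \<in> {0<..<1}" "\<theta>0 < y" "y < 1" "y \<le> \<theta>1" using y y0 th th2 th1 by auto
  have "\<theta>0 - (1 - F \<theta>0) / f \<theta>0 \<le> y - (1 - F y) / f y"
    using mr th yin unfolding myerson_regular_def mono_on_def by auto
  then have "(1 - F y) / f y \<le> y - \<theta>0" using f0 by simp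
  then have "1 - F y \<le> (y - \<theta>0) * f y" using y(2) by (simp add: divide_le_eq)
  moreover have "f y < c" using d(2)[of y] y th2 f0 yin by auto
  moreover have "y - \<theta>0 < 1" using yin th by auto
  moreover have "c \<le> 1 - F y" using F_mono[OF td, of y \<theta>1] yin th th1 by (auto simp: c_def)
  moreover have "(y - \<theta>0) * f y \<le> 1 * f y"
    using \<open>y - \<theta>0 < 1\<close> y(2) by (intro mult_right_mono) auto
  ultimately have "(y - \<theta>0) * f y < c" by linarith
  then show False using \<open>1 - F y \<le> (y - \<theta>0) * f y\<close> \<open>c \<le> 1 - F y\<close> by linarith
qed

lemma cdf01_mono: "cdf01 H \<Longrightarrow> x \<le> y \<Longrightarrow> H x \<le> H y"
  unfolding cdf01_def mono_def by blast

lemma cdf01_range: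
  assumes "cdf01 H" shows "0 \<le> H y" "H y \<le> 1"
proof -
  have "H (min y (-1)) \<le> H y" "H y \<le> H (max y 1)" using cdf01_mono[OF assms] by auto
  moreover have "H (min y (-1)) = 0" "H (max y 1) = 1" using assms unfolding cdf01_def by auto
  ultimately show "0 \<le> H y" "H y \<le> 1" by auto
qed

lemma prizeD:
  assumes "prize_dist G"
  shows "cdf01 G" "G 0 = 0" "\<And>x y. x \<le> y \<Longrightarrow> G x \<le> G y" "\<And>y. 0 \<le> G y" "\<And>y. G y \<le> 1"
    "\<And>y. continuous (at_right y) G" "G 1 = 1"
  using assms cdf01_range[of G] cdf01_mono[of G] unfolding prize_dist_def cdf01_def by auto

lemma qinv_range:
  assumes "prize_dist G" "q \<le> 1"
  shows "0 \<le> qinv G q" "qinv G q \<le> 1"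
proof -
  let ?S = "{x\<in>{0..1}. q \<le> G x}"
  have "1 \<in> ?S" using prizeD(7)[OF assms(1)] assms by auto
  then show "qinv G q \<le> 1" unfolding qinv_def by (intro cInf_lower) (auto intro: bdd_belowI[of _ 0])
  show "0 \<le> qinv G q" unfolding qinv_def using \<open>1 \<in> ?S\<close> by (intro cInf_greatest) auto
qed

lemma qinv_le_iff:
  assumes pG: "prize_dist G" and q: "q \<le> 1" and s: "s \<in> {0..1}"
  shows "qinv G q \<le> s \<longleftrightarrow> q \<le> G s"
proof
  let ?S = "{x\<in>{0..1}. q \<le> G x}"
  have ne: "?S \<noteq> {}" and bdd: "bdd_below ?S"
    using prizeD(7)[OF pG] q by (auto intro!: bdd_belowI[of _ 0])
  assume "q \<le> G s" then show "qinv G q \<le> s" unfolding qinv_def using s bdd by (intro cInf_lower) auto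
next
  let ?S = "{x\<in>{0..1}. q \<le> G x}"
  let ?i = "qinv G q"
  have ne: "?S \<noteq> {}" and bdd: "bdd_below ?S"
    using prizeD(7)[OF pG] q by (auto intro!: bdd_belowI[of _ 0])
  assume le: "qinv G q \<le> s"
  have ev: "eventually (\<lambda>x. q \<le> G x) (at_right ?i)"
  proof -
    have "q \<le> G x" if xi: "x > ?i" for x
    proof -
      have "Inf ?S < x" using xi unfolding qinv_def .
      from cInf_lessD[OF ne this] obtain y where "y \<in> ?S" "y < x" by blast
      then show ?thesis using prizeD(3)[OF pG, of y x] by auto
    qed
    then show ?thesis unfolding eventually_at_right_field by (intro exI[of _ "?i + 1"]) auto
  qed
  have "(G \<longlongrightarrow> G ?i) (at_right ?i)"
    using prizeD(6)[OF pG, of ?i] by (simp add: continuous_within)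
  then have "q \<le> G ?i" by (rule tendsto_lowerbound[OF _ ev]) simp
  then show "q \<le> G s" using prizeD(3)[OF pG le] by simp
qed

lemma qinv_self: "prize_dist G \<Longrightarrow> q \<le> 1 \<Longrightarrow> q \<le> G (qinv G q)"
  using qinv_le_iff[of G q "qinv G q"] qinv_range[of G q] by auto

lemma qinv_mono:
  assumes "prize_dist G" "q1 \<le> q2" "q2 \<le> 1"
  shows "qinv G q1 \<le> qinv G q2"
  using qinv_le_iff[OF assms(1), of q1 "qinv G q2"] qinv_self[OF assms(1,3)] qinv_range[OF assms(1,3)] assms
  by auto

definition step :: "real \<Rightarrow> real \<Rightarrow> real" where
  "step a = (\<lambda>y. if a \<le> y then 1 else 0)"

lemma cdf01_step:
  assumes "0 \<le> a" "a \<le> 1"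
  shows "cdf01 (step a)"
  unfolding cdf01_def
proof (intro conjI allI impI)
  show "mono (step a)" unfolding mono_def step_def by auto
  fix x
  show "continuous (at_right x) (step a)"
    unfolding continuous_within
  proof (rule tendsto_eventually)
    show "\<forall>\<^sub>F y in at_right x. step a y = step a x"
      unfolding eventually_at_right_field
    proof (cases "a \<le> x")
      case True
      then show "\<exists>b>x. \<forall>y>x. y < b \<longrightarrow> step a y = step a x"
        by (intro exI[of _ "x+1"]) (auto simp: step_def)
    next
      case False
      then show "\<exists>b>x. \<forall>y>x. y < b \<longrightarrow> step a y = step a x"
        by (intro exI[of _ a]) (auto simp: step_def)
    qed
  qed
qed (use assms in \<open>auto simp: step_def\<close>)

lemma cdf01_lims:
  assumes "cdf01 H"
  shows "(H \<longlongrightarrow> 0) at_bot" "(H \<longlongrightarrow> 1) at_top"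
proof -
  have "eventually (\<lambda>x. H x = 0) at_bot" using assms unfolding cdf01_def eventually_at_bot_linorder
    by (intro exI[of _ "-1"]) auto
  then show "(H \<longlongrightarrow> 0) at_bot" by (rule tendsto_eventually)
  have "eventually (\<lambda>x. H x = 1) at_top" using assms unfolding cdf01_def eventually_at_top_linorder
    by (intro exI[of _ "1"]) auto
  then show "(H \<longlongrightarrow> 1) at_top" by (rule tendsto_eventually)
qed

lemma cdf01_real_distribution:
  assumes "cdf01 H"
  shows "real_distribution (interval_measure H)"
  apply (rule real_distribution_interval_measure)
  using assms cdf01_lims[OF assms] unfolding cdf01_def mono_def by auto

lemma cdf01_Iic:
  assumes "cdf01 H"
  shows "measure (interval_measure H) {..x} = H x" "emeasure (interval_measure H) {..x} = H x"
  using measure_interval_measure_Iic[of H x] emeasure_interval_measure_Iic[of H x]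
    assms cdf01_lims[OF assms] unfolding cdf01_def mono_def by auto

lemma cdf_mean_step:
  assumes "0 \<le> a" "a \<le> 1"
  shows "cdf_mean (step a) = a"
proof -
  have rd1: "real_distribution (interval_measure (step a))"
    using cdf01_real_distribution[OF cdf01_step[OF assms]] .
  have rd2: "real_distribution (return borel a)"
    unfolding real_distribution_def real_distribution_axioms_def
    by (auto simp: prob_space_return)
  have "cdf (interval_measure (step a)) = step a"
    using cdf01_Iic(1)[OF cdf01_step[OF assms]] by (auto simp: cdf_def)
  moreover have "cdf (return borel a) = step a"
    by (auto simp: cdf_def step_def fun_eq_iff measure_return indicator_def)
  ultimately have "interval_measure (step a) = return borel a"
    using cdf_unique[OF rd1 rd2] by simp
  then show ?thesis unfolding cdf_mean_def by (simp add: integral_return)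
qed

lemma count_lemma:
  "(\<Sum>k<n. if Suc k < m then 1 else 0 :: real) = real (min n (m - 1))"
  by (induction n) (auto simp: min_def)

definition Dn :: "nat \<Rightarrow> (real \<Rightarrow> real) \<Rightarrow> real" where
  "Dn n H = (\<Sum>k<n. H (real (Suc k) / real n)) / real n"

lemma phi_bounds:
  assumes n: "n > 0" and y: "0 \<le> y" "y \<le> 1"
  shows "(\<Sum>k<n. indicator {real (Suc k) / real n<..} y) / real n \<le> y"
    "y \<le> (\<Sum>k<n. indicator {real (Suc k) / real n<..} y) / real n + 1 / real n"
proof -
  define m where "m = nat \<lceil>real n * y\<rceil>"
  have m: "real m = \<lceil>real n * y\<rceil>" unfolding m_def using y by simp
  have mn: "m \<le> n" unfolding m_def using y n
    by (metis ceiling_le_iff mult_left_le nat_le_iff of_int_of_nat_eq of_nat_0_le_iff)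
  have eq: "indicator {real (Suc k) / real n<..} y = (if Suc k < m then 1 else (0::real))" for k
  proof -
    have "real (Suc k) / real n < y \<longleftrightarrow> real (Suc k) < real n * y" using n
      by (simp add: divide_less_eq mult.commute)
    also have "\<dots> \<longleftrightarrow> int (Suc k) < \<lceil>real n * y\<rceil>" by (simp add: less_ceiling_iff)
    also have "\<dots> \<longleftrightarrow> Suc k < m" unfolding m_def by linarith
    finally show ?thesis by (simp add: indicator_def)
  qed
  have S: "(\<Sum>k<n. indicator {real (Suc k) / real n<..} y) = real (m - 1)"
    unfolding eq count_lemma using mn by simp
  have c1: "real n * y \<le> real m" using m by linarith
  have c2: "real m < real n * y + 1" using m by linarith
  show "(\<Sum>k<n. indicator {real (Suc k) / real n<..} y) / real n \<le> y"
  proof (cases "m = 0")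
    case True then show ?thesis unfolding S using y by simp
  next
    case False
    then have "real (m - 1) \<le> real n * y" using c2 by (simp add: of_nat_diff)
    then show ?thesis unfolding S using n by (simp add: divide_le_eq mult.commute)
  qed
  show "y \<le> (\<Sum>k<n. indicator {real (Suc k) / real n<..} y) / real n + 1 / real n"
  proof -
    have "real m \<le> real (m - 1) + 1" by linarith
    then have "real n * y \<le> real (m - 1) + 1" using c1 by linarith
    then have "y \<le> (real (m - 1) + 1) / real n" using n by (simp add: le_divide_eq mult.commute)
    then show ?thesis unfolding S by (simp add: add_divide_distrib)
  qed
qed

lemma cdf_mean_bounds:
  assumes H: "cdf01 H" and n: "n > 0"
  shows "1 - Dn n H \<le> cdf_mean H" "cdf_mean H \<le> 1 - Dn n H + 1 / real n"
proof -
  let ?M = "interval_measure H"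
  interpret rd: real_distribution ?M using cdf01_real_distribution[OF H] .
  have sp: "space ?M = UNIV" "sets ?M = sets borel" by auto
  have Ioi: "measure ?M {x<..} = 1 - H x" for x
  proof -
    have "{x<..} = space ?M - {..x}" by auto
    then show ?thesis using rd.prob_compl[of "{..x}"] cdf01_Iic(1)[OF H, of x] by simp
  qed
  have null1: "{1<..} \<in> null_sets ?M"
    using Ioi[of 1] H unfolding cdf01_def by (simp add: rd.emeasure_eq_measure null_sets_def)
  have null0: "{..<0::real} \<in> null_sets ?M"
  proof -
    have sub: "{..<0::real} \<subseteq> (\<Union>i::nat. {..- 1 / real (Suc i)})"
    proof
      fix x :: real assume "x \<in> {..<0}"
      then have "x < 0" by simp
      then obtain i :: nat where "1 / real (Suc i) < - x"
        using reals_Archimedean[of "-x"] by (auto simp: inverse_eq_divide)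
      then have "x \<le> - 1 / real (Suc i)" by simp
      then show "x \<in> (\<Union>i. {..- 1 / real (Suc i)})" by blast
    qed
    moreover have "{..- 1 / real (Suc i)} \<in> null_sets ?M" for i
    proof -
      have "H (- 1 / real (Suc i)) = 0" using H unfolding cdf01_def by auto
      then show ?thesis using cdf01_Iic(2)[OF H, of "- 1 / real (Suc i)"] by (simp add: null_sets_def)
    qed
    then have "(\<Union>i::nat. {..- 1 / real (Suc i)}) \<in> null_sets ?M" by auto
    from null_sets_subset[OF this _ sub] show ?thesis by simp
  qed
  have AE01: "AE y in ?M. 0 \<le> y \<and> y \<le> 1"
    by (rule AE_I'[of "{..<0} \<union> {1<..}"]) (use null0 null1 in auto)
  have intid: "integrable ?M (\<lambda>y. y)"
    by (rule rd.integrable_const_bound[where B=1]) (use AE01 in \<open>auto elim!: AE_mp\<close>)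
  define phi where "phi y = (\<Sum>k<n. indicator {real (Suc k) / real n<..} y) / real n" for y :: real
  have intind: "integrable ?M (indicator {real (Suc k) / real n<..} :: real \<Rightarrow> real)" for k
    by (rule integrable_real_indicator) (auto simp: rd.emeasure_eq_measure)
  have intphi: "integrable ?M phi" unfolding phi_def using intind by auto
  have intphi1: "integrable ?M (\<lambda>y. phi y + 1 / real n)" using intphi by auto
  have "integral\<^sup>L ?M phi = (\<Sum>k<n. integral\<^sup>L ?M (indicator {real (Suc k) / real n<..})) / real n"
    unfolding phi_def using intind by (simp add: integral_sum)
  also have "\<dots> = (\<Sum>k<n. 1 - H (real (Suc k) / real n)) / real n"
    by (simp add: Ioi)
  also have "\<dots> = 1 - Dn n H" unfolding Dn_def using n by (simp add: sum_subtractf diff_divide_distrib)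
  finally have iphi: "integral\<^sup>L ?M phi = 1 - Dn n H" .
  have "integral\<^sup>L ?M phi \<le> integral\<^sup>L ?M (\<lambda>y. y)"
    by (rule integral_mono_AE[OF intphi intid]) (use AE01 in \<open>eventually_elim, use phi_bounds(1)[OF n] in \<open>auto simp: phi_def\<close>\<close>)
  then show "1 - Dn n H \<le> cdf_mean H" unfolding cdf_mean_def iphi .
  have "integral\<^sup>L ?M (\<lambda>y. y) \<le> integral\<^sup>L ?M (\<lambda>y. phi y + 1 / real n)"
    by (rule integral_mono_AE[OF intid intphi1]) (use AE01 in \<open>eventually_elim, use phi_bounds(2)[OF n] in \<open>auto simp: phi_def\<close>\<close>)
  also have "\<dots> = integral\<^sup>L ?M phi + 1 / real n" using intphi rd.prob_space sp(1) by simp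
  finally show "cdf_mean H \<le> 1 - Dn n H + 1 / real n" unfolding cdf_mean_def iphi .
qed

lemma mono_bm:
  fixes x :: "real \<Rightarrow> real"
  assumes "mono_on {a..b} x"
  shows "x \<in> borel_measurable (lebesgue_on {a..b})"
proof -
  have "space lborel = space lebesgue" "sets borel \<subseteq> sets lebesgue"
    by force+
  then show ?thesis
    by (metis assms borel_measurable_mono_on_fnc borel_measurable_subalgebra mono_restrict_space space_lborel space_restrict_space)
qed

lemma antimono_bm:
  fixes x :: "real \<Rightarrow> real"
  assumes "\<And>u v. u \<in> {a..b} \<Longrightarrow> v \<in> {a..b} \<Longrightarrow> u \<le> v \<Longrightarrow> x v \<le> x u"
  shows "x \<in> borel_measurable (lebesgue_on {a..b})"
proof -
  have "mono_on {a..b} (\<lambda>u. - x u)" using assms unfolding mono_on_def by force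
  from mono_bm[OF this] have "(\<lambda>u. - (- x u)) \<in> borel_measurable (lebesgue_on {a..b})"
    by (rule borel_measurable_uminus)
  then show ?thesis by simp
qed

lemma int_bm_cont:
  fixes h c :: "real \<Rightarrow> real"
  assumes h: "h \<in> borel_measurable (lebesgue_on {a..b})"
    and B: "\<And>\<theta>. \<theta> \<in> {a..b} \<Longrightarrow> \<bar>h \<theta>\<bar> \<le> B"
    and c: "continuous_on {a..b} c"
  shows "(\<lambda>\<theta>. c \<theta> * h \<theta>) integrable_on {a..b}"
proof -
  have "bounded (h ` {a..b})" using B unfolding bounded_iff by (intro exI[of _ B]) auto
  moreover have "c absolutely_integrable_on {a..b}"
    using absolutely_integrable_continuous_real[of a b c] c by simp
  ultimately have "(\<lambda>\<theta>. h \<theta> * c \<theta>) absolutely_integrable_on {a..b}"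
    using absolutely_integrable_bounded_measurable_product_real[OF h] by simp
  then show ?thesis using set_lebesgue_integral_eq_integral(1) by (simp add: mult.commute)
qed

lemma bm_div:
  assumes td: "type_dist F f" and mr: "myerson_regular F f"
    and i: "(\<lambda>\<theta>. f \<theta> * g \<theta>) integrable_on {0..1}"
  shows "g \<in> borel_measurable (lebesgue_on {0..1})"
proof -
  have m1: "(\<lambda>\<theta>. f \<theta> * g \<theta>) \<in> borel_measurable (lebesgue_on {0..1})"
    using integrable_imp_measurable[OF i] .
  have m2: "f \<in> borel_measurable (lebesgue_on {0..1})"
    using continuous_imp_measurable_on_sets_lebesgue[OF typeD(4)[OF td]] by simp
  have s0: "{0::real} \<inter> space (lebesgue_on {0..1}) \<in> sets (lebesgue_on {0..1})"
    by (auto simp: sets_restrict_space_iff)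
  have s1: "{1::real} \<inter> space (lebesgue_on {0..1}) \<in> sets (lebesgue_on {0..1})"
    by (auto simp: sets_restrict_space_iff)
  have m4: "(\<lambda>\<theta>. (f \<theta> * g \<theta>) / f \<theta>) \<in> borel_measurable (lebesgue_on {0..1})"
    using m1 m2 by (rule borel_measurable_divide)
  have m3: "(\<lambda>\<theta>. if \<theta> \<in> {0} then g 0 else if \<theta> \<in> {1} then g 1 else (f \<theta> * g \<theta>) / f \<theta>)
      \<in> borel_measurable (lebesgue_on {0..1})"
    by (rule measurable_If_set[OF measurable_const measurable_If_set[OF measurable_const m4 s1] s0]) auto
  have eq: "(if \<theta> \<in> {0} then g 0 else if \<theta> \<in> {1} then g 1 else (f \<theta> * g \<theta>) / f \<theta>) = g \<theta>"
    if "\<theta> \<in> space (lebesgue_on {0..1})" for \<theta>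
  proof -
    have "\<theta> \<in> {0..1}" using that by simp
    then consider "\<theta> = 0" | "\<theta> = 1" | "\<theta> \<in> {0<..<1}" by fastforce
    then show ?thesis
    proof cases
      case 3
      then have "f \<theta> > 0" using f_pos[OF td mr] by blast
      then show ?thesis using 3 by auto
    qed auto
  qed
  show ?thesis
    by (rule measurable_cong_simp[THEN iffD1, OF refl refl _ m3]) (rule eq)
qed

lemma lim_le:
  fixes a b c :: real
  assumes "\<And>n. n > 0 \<Longrightarrow> a \<le> b + c / real n"
  shows "a \<le> b"
proof (rule ccontr)
  assume "\<not> a \<le> b"
  then have d: "a - b > 0" by simp
  obtain n :: nat where n: "real n > \<bar>c\<bar> / (a - b)" using reals_Archimedean2 by blast
  then have np: "n > 0" using d by (metis abs_ge_zero divide_nonneg_pos of_nat_0_less_iff order_le_less_trans)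
  have "\<bar>c\<bar> < (a - b) * real n" using n d by (simp add: divide_less_eq mult.commute)
  then have "\<bar>c\<bar> / real n < a - b" using np by (simp add: divide_less_eq mult.commute)
  moreover have "c / real n \<le> \<bar>c\<bar> / real n" using np by (simp add: divide_right_mono)
  ultimately show False using assms[OF np] by linarith
qed

lemma riemann_upper:
  fixes g :: "real \<Rightarrow> real"
  assumes g: "mono_on {a..b} g" and ab: "a \<le> b" and n: "n > 0"
  shows "integral {a..b} g \<le> (b - a) / real n * (\<Sum>k<n. g (a + real (Suc k) * (b - a) / real n))"
proof -
  define h where "h = (b - a) / real n"
  have h: "h \<ge> 0" unfolding h_def using ab by simp
  have p: "a + real j * h \<le> b" if "j \<le> n" for j
  proof -
    have "real j * h \<le> real n * h" using that h by (simp add: mult_right_mono)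
    also have "\<dots> = b - a" unfolding h_def using n by simp
    finally show ?thesis by simp
  qed
  have "integral {a..a + real j * h} g \<le> h * (\<Sum>k<j. g (a + real (Suc k) * h))" if "j \<le> n" for j
    using that
  proof (induction j)
    case 0
    then show ?case by simp
  next
    case (Suc j)
    let ?p = "a + real j * h" and ?q = "a + real (Suc j) * h"
    have pq: "a \<le> ?p" "?p \<le> ?q" "?q \<le> b" using h p[of "Suc j"] Suc.prems
      by (auto simp: algebra_simps)
    have int: "g integrable_on {a..?q}"
      by (rule integrable_on_mono_on) (rule mono_on_subset[OF g], use pq in auto)
    have "integral {a..?q} g = integral {a..?p} g + integral {?p..?q} g"
      using Henstock_Kurzweil_Integration.integral_combine[OF pq(1,2) int] by simp
    also have "integral {?p..?q} g \<le> integral {?p..?q} (\<lambda>_. g ?q)"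
    proof (rule integral_le)
      show "g integrable_on {?p..?q}"
        by (rule integrable_on_mono_on) (rule mono_on_subset[OF g], use pq in auto)
      show "(\<lambda>_. g ?q) integrable_on {?p..?q}" by (rule integrable_const_ivl)
      fix u assume "u \<in> {?p..?q}"
      then show "g u \<le> g ?q" using g pq unfolding mono_on_def by auto
    qed
    also have "integral {?p..?q} (\<lambda>_. g ?q) = h * g ?q" using pq h by (simp add: algebra_simps)
    finally show ?case using Suc by (simp add: algebra_simps)
  qed
  note main = this[of n]
  have e1: "a + real n * h = b" unfolding h_def using n by simp
  have e2: "\<And>k. a + real (Suc k) * h = a + real (Suc k) * (b - a) / real n" unfolding h_def by simp
  from main show ?thesis unfolding e1 e2 by (simp add: h_def)
qed

lemma env1:
  fixes x t :: "real \<Rightarrow> real"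
  assumes mx: "mono_on {0..1} x"
    and IC: "\<forall>\<theta>\<in>{0..1}. \<forall>\<theta>'\<in>{0..1}. \<theta> * x \<theta> - t \<theta> \<ge> \<theta> * x \<theta>' - t \<theta>'"
    and th: "\<theta> \<in> {0..1}"
  shows "integral {0..\<theta>} x \<le> (\<theta> * x \<theta> - t \<theta>) - (0 * x 0 - t 0)"
proof (rule lim_le)
  define U where "U s = s * x s - t s" for s
  fix n :: nat assume n: "n > 0"
  define h where "h = \<theta> / real n"
  define p where "p k = real k * h" for k :: nat
  have h: "0 \<le> h" unfolding h_def using th by simp
  have pin: "p k \<in> {0..1}" if "k \<le> n" for k
  proof -
    have "real k * h \<le> real n * h" using that h by (simp add: mult_right_mono)
    also have "\<dots> = \<theta>" unfolding h_def using n by simp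
    finally show ?thesis unfolding p_def using th h by auto
  qed
  have step: "U (p (Suc k)) - U (p k) \<ge> h * x (p k)" if "k < n" for k
  proof -
    have "U (p (Suc k)) \<ge> p (Suc k) * x (p k) - t (p k)"
      using IC pin[of "Suc k"] pin[of k] that unfolding U_def by auto
    moreover have "p (Suc k) = p k + h" unfolding p_def by (simp add: algebra_simps)
    ultimately show ?thesis unfolding U_def by (simp add: algebra_simps)
  qed
  have "(\<Sum>k<n. U (p (Suc k)) - U (p k)) = U (p n) - U (p 0)"
    by (rule sum_lessThan_telescope)
  moreover have "p n = \<theta>" "p 0 = 0" unfolding p_def h_def using n by auto
  ultimately have tel: "U \<theta> - U 0 \<ge> (\<Sum>k<n. h * x (p k))"
    using sum_mono[of "{..<n}" "\<lambda>k. h * x (p k)" "\<lambda>k. U (p (Suc k)) - U (p k)"] step by auto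
  have mx': "mono_on {0..\<theta>} x" by (rule mono_on_subset[OF mx]) (use th in auto)
  have "integral {0..\<theta>} x \<le> (\<theta> - 0) / real n * (\<Sum>k<n. x (0 + real (Suc k) * (\<theta> - 0) / real n))"
    by (rule riemann_upper[OF mx' _ n]) (use th in auto)
  also have "\<dots> = (\<Sum>k<n. h * x (p (Suc k)))"
    unfolding h_def p_def by (simp add: sum_distrib_left)
  also have "(\<Sum>k<n. h * x (p (Suc k))) = (\<Sum>k<n. h * x (p k)) + h * (x \<theta> - x 0)"
  proof -
    have "(\<Sum>k<n. h * x (p (Suc k)) - h * x (p k)) = h * x (p n) - h * x (p 0)"
      by (rule sum_lessThan_telescope)
    then show ?thesis using \<open>p n = \<theta>\<close> \<open>p 0 = 0\<close> by (simp add: sum_subtractf algebra_simps)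
  qed
  finally have "integral {0..\<theta>} x \<le> (U \<theta> - U 0) + h * (x \<theta> - x 0)" using tel by linarith
  then show "integral {0..\<theta>} x \<le> (\<theta> * x \<theta> - t \<theta>) - (0 * x 0 - t 0) + \<theta> * (x \<theta> - x 0) / real n"
    unfolding U_def h_def by simp
qed

lemma mono_bound:
  fixes x :: "real \<Rightarrow> real"
  assumes "mono_on {a..b} x" "s \<in> {a..b}"
  shows "\<bar>x s\<bar> \<le> \<bar>x a\<bar> + \<bar>x b\<bar>"
proof -
  have "x a \<le> x s" "x s \<le> x b" using assms unfolding mono_on_def by auto
  then show ?thesis by linarith
qed

lemma E2:
  fixes F f x :: "real \<Rightarrow> real"
  assumes td: "type_dist F f" and mx: "mono_on {0..1} x"
  shows "integral {0..1} (\<lambda>\<theta>. f \<theta> * integral {0..\<theta>} x) = integral {0..1} (\<lambda>s. (1 - F s) * x s)"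
proof -
  define B where "B = \<bar>x 0\<bar> + \<bar>x 1\<bar>"
  have xB: "\<And>s. s \<in> {0..1} \<Longrightarrow> \<bar>x s\<bar> \<le> B" unfolding B_def using mono_bound[OF mx] by blast
  obtain M where M: "M > 0" "\<And>\<theta>. \<theta> \<in> {0..1} \<Longrightarrow> \<bar>f \<theta>\<bar> \<le> M" using f_bound[OF td] by blast
  have MB0: "0 \<le> M * B" using M(1) by (simp add: B_def)
  define xb where "xb s = indicator {0..1} s * x s" for s
  define fb where "fb s = indicator {0..1} s * f s" for s
  define Fb where "Fb s = indicator {0..1} s * F s" for s
  have xbm[measurable]: "xb \<in> borel_measurable borel"
  proof -
    have "x \<in> borel_measurable (restrict_space borel {0..1})" by (rule borel_measurable_mono_on_fnc[OF mx])
    then show ?thesis unfolding xb_def using borel_measurable_restrict_space_iff[of "{0..1}" borel x] by simp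
  qed
  have fbm[measurable]: "fb \<in> borel_measurable borel"
    unfolding fb_def using borel_measurable_continuous_on_indicator[OF _ typeD(4)[OF td]] by simp
  have Fbm[measurable]: "Fb \<in> borel_measurable borel"
    unfolding Fb_def using borel_measurable_continuous_on_indicator[OF _ F_cont[OF td]] by simp
  define K where "K \<theta> s = fb \<theta> * xb s * (if s \<le> \<theta> then 1 else 0)" for \<theta> s :: real
  have Km: "(\<lambda>(\<theta>, s). K \<theta> s) \<in> borel_measurable (lborel \<Otimes>\<^sub>M lborel)"
    unfolding K_def by measurable
  have Kint: "integrable (lborel \<Otimes>\<^sub>M lborel) (\<lambda>(\<theta>, s). K \<theta> s)"
  proof (rule integrableI_bounded_set[where A="{0..1} \<times> {0..1}" and B="M * B"])
    have s01: "{0..1::real} \<in> sets lborel" using borel_closed[OF closed_atLeastAtMost[of 0 1]] by simp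
    show "{0..1::real} \<times> {0..1::real} \<in> sets (lborel \<Otimes>\<^sub>M lborel)" by (rule pair_measureI[OF s01 s01])
    show "(\<lambda>(\<theta>, s). K \<theta> s) \<in> borel_measurable (lborel \<Otimes>\<^sub>M lborel)" by (rule Km)
    show "emeasure (lborel \<Otimes>\<^sub>M lborel) ({0..1::real} \<times> {0..1::real}) < \<infinity>"
    proof -
      have s01: "{0..1::real} \<in> sets lborel" using borel_closed[OF closed_atLeastAtMost[of 0 1]] by simp
      show ?thesis by (simp add: lborel.emeasure_pair_measure_Times[OF s01 s01])
    qed
    show "AE p in lborel \<Otimes>\<^sub>M lborel. p \<in> {0..1} \<times> {0..1} \<longrightarrow> norm (case p of (\<theta>, s) \<Rightarrow> K \<theta> s) \<le> M * B"
    proof -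
      have Kb: "norm (K \<theta> s) \<le> M * B" if a: "(\<theta>, s) \<in> {0..1} \<times> {0..1}" for \<theta> s :: real
      proof -
        from a have "\<bar>f \<theta>\<bar> \<le> M" "\<bar>x s\<bar> \<le> B" using M xB by auto
        then have "\<bar>f \<theta>\<bar> * \<bar>x s\<bar> \<le> M * B" using M by (intro mult_mono) auto
        then show ?thesis using a MB0 unfolding K_def fb_def xb_def
          by (auto simp: abs_mult)
      qed
      show ?thesis by (rule AE_I2) (use Kb in auto)
    qed
    show "AE p in lborel \<Otimes>\<^sub>M lborel. p \<notin> {0..1} \<times> {0..1} \<longrightarrow> (case p of (\<theta>, s) \<Rightarrow> K \<theta> s) = 0"
      by (rule AE_I2) (auto simp: K_def fb_def xb_def indicator_def)
  qed
  have fub: "(\<integral>s. (\<integral>\<theta>. K \<theta> s \<partial>lborel) \<partial>lborel) = (\<integral>\<theta>. (\<integral>s. K \<theta> s \<partial>lborel) \<partial>lborel)"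
    using lborel_pair.Fubini_integral[OF Kint] .
  define X where "X \<theta> = integral {0..\<theta>} x" for \<theta>
  have inner1: "(\<integral>s. K \<theta> s \<partial>lborel) = fb \<theta> * X \<theta>" for \<theta>
  proof (cases "\<theta> \<in> {0..1}")
    case False
    then show ?thesis by (simp add: K_def fb_def)
  next
    case True
    have si: "set_integrable lborel {0..\<theta>} xb"
      unfolding set_integrable_def
    proof (rule integrableI_bounded_set_indicator[where B=B])
      show "{0..\<theta>} \<in> sets lborel" using borel_closed[OF closed_atLeastAtMost[of 0 \<theta>]] by simp
      show "xb \<in> borel_measurable lborel" using xbm by simp
      show "emeasure lborel {0..\<theta>} < \<infinity>" using True by simp
      show "AE s in lborel. s \<in> {0..\<theta>} \<longrightarrow> norm (xb s) \<le> B"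
        by (rule AE_I2) (use xB True in \<open>auto simp: xb_def\<close>)
    qed
    have "(\<integral>s. K \<theta> s \<partial>lborel) = (\<integral>s. fb \<theta> * (indicator {0..\<theta>} s *\<^sub>R xb s) \<partial>lborel)"
      by (rule Bochner_Integration.integral_cong) (use True in \<open>auto simp: K_def xb_def indicator_def\<close>)
    also have "\<dots> = fb \<theta> * (LINT s:{0..\<theta>}|lborel. xb s)"
      unfolding set_lebesgue_integral_def by simp
    also have "(LINT s:{0..\<theta>}|lborel. xb s) = integral {0..\<theta>} xb"
      using set_borel_integral_eq_integral(2)[OF si] .
    also have "integral {0..\<theta>} xb = X \<theta>"
      unfolding X_def by (rule integral_cong) (use True in \<open>auto simp: xb_def\<close>)
    finally show ?thesis .
  qed
  have Xc: "continuous_on {0..1} X"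
    unfolding X_def by (rule indefinite_integral_continuous_1) (rule integrable_on_mono_on[OF mx])
  have fXc: "continuous_on {0..1} (\<lambda>\<theta>. f \<theta> * X \<theta>)"
    using typeD(4)[OF td] Xc by (intro continuous_intros)
  have lhs: "(\<integral>\<theta>. (\<integral>s. K \<theta> s \<partial>lborel) \<partial>lborel) = integral {0..1} (\<lambda>\<theta>. f \<theta> * X \<theta>)"
  proof -
    have "(\<integral>\<theta>. (\<integral>s. K \<theta> s \<partial>lborel) \<partial>lborel) = (LINT \<theta>:{0..1}|lborel. f \<theta> * X \<theta>)"
      unfolding inner1 set_lebesgue_integral_def
      by (rule Bochner_Integration.integral_cong) (auto simp: fb_def)
    also have "\<dots> = integral {0..1} (\<lambda>\<theta>. f \<theta> * X \<theta>)"
      by (rule set_borel_integral_eq_integral(2)[OF borel_integrable_atLeastAtMost'[OF fXc]])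
    finally show ?thesis .
  qed
  have inner2: "(\<integral>\<theta>. K \<theta> s \<partial>lborel) = xb s * (1 - Fb s)" for s
  proof (cases "s \<in> {0..1}")
    case False
    then show ?thesis by (simp add: K_def xb_def)
  next
    case True
    have fc: "continuous_on {s..1} f" by (rule continuous_on_subset[OF typeD(4)[OF td]]) (use True in auto)
    have "(\<integral>\<theta>. K \<theta> s \<partial>lborel) = (\<integral>\<theta>. xb s * (indicator {s..1} \<theta> *\<^sub>R f \<theta>) \<partial>lborel)"
      by (rule Bochner_Integration.integral_cong) (use True in \<open>auto simp: K_def fb_def indicator_def\<close>)
    also have "\<dots> = xb s * (LINT \<theta>:{s..1}|lborel. f \<theta>)"
      unfolding set_lebesgue_integral_def by simp
    also have "(LINT \<theta>:{s..1}|lborel. f \<theta>) = integral {s..1} f"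
      by (rule set_borel_integral_eq_integral(2)[OF borel_integrable_atLeastAtMost'[OF fc]])
    also have "integral {s..1} f = F 1 - F s"
      using F_diff[OF td, of s 1] True by (simp add: integral_unique)
    finally show ?thesis using True typeD(2)[OF td] by (simp add: Fb_def)
  qed
  have rhs: "(\<integral>s. (\<integral>\<theta>. K \<theta> s \<partial>lborel) \<partial>lborel) = integral {0..1} (\<lambda>s. (1 - F s) * x s)"
  proof -
    have si: "set_integrable lborel {0..1} (\<lambda>s. xb s * (1 - Fb s))"
      unfolding set_integrable_def
    proof (rule integrableI_bounded_set_indicator[where B="B"])
      show "(\<lambda>s. xb s * (1 - Fb s)) \<in> borel_measurable lborel" by measurable
      fix s :: real
      show "AE s in lborel. s \<in> {0..1} \<longrightarrow> norm (xb s * (1 - Fb s)) \<le> B"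
      proof (rule AE_I2, safe)
        fix s :: real assume s: "s \<in> {0..1}"
        then have "0 \<le> 1 - F s" "1 - F s \<le> 1" using F_range[OF td, of s] by auto
        then have "\<bar>x s\<bar> * \<bar>1 - F s\<bar> \<le> B * 1" using xB[OF s] by (intro mult_mono) auto
        then show "norm (xb s * (1 - Fb s)) \<le> B" using s by (simp add: xb_def Fb_def abs_mult)
      qed
    qed auto
    have "(\<integral>s. (\<integral>\<theta>. K \<theta> s \<partial>lborel) \<partial>lborel) = (LINT s:{0..1}|lborel. xb s * (1 - Fb s))"
      unfolding inner2 set_lebesgue_integral_def
      by (rule Bochner_Integration.integral_cong) (auto simp: xb_def indicator_def)
    also have "\<dots> = integral {0..1} (\<lambda>s. xb s * (1 - Fb s))"
      by (rule set_borel_integral_eq_integral(2)[OF si])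
    also have "\<dots> = integral {0..1} (\<lambda>s. (1 - F s) * x s)"
      by (rule integral_cong) (auto simp: xb_def Fb_def)
    finally show ?thesis .
  qed
  show ?thesis using fub lhs rhs unfolding X_def by simp
qed

definition ww :: "(real \<Rightarrow> real) \<Rightarrow> (real \<Rightarrow> real) \<Rightarrow> real \<Rightarrow> real" where
  "ww F f \<theta> = \<theta> * f \<theta> - (1 - F \<theta>)"

definition Gst :: "(real \<Rightarrow> real) \<Rightarrow> (real \<Rightarrow> real) \<Rightarrow> real \<Rightarrow> real \<Rightarrow> real \<Rightarrow> real" where
  "Gst F G t \<theta> = step (xstar F G t \<theta>)"

definition tst :: "(real \<Rightarrow> real) \<Rightarrow> (real \<Rightarrow> real) \<Rightarrow> real \<Rightarrow> real \<Rightarrow> real" where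
  "tst F G t \<theta> = \<theta> * xstar F G t \<theta> - integral {0..\<theta>} (xstar F G t)"

lemma ww_cont: "type_dist F f \<Longrightarrow> continuous_on {0..1} (ww F f)"
  unfolding ww_def using typeD(4) F_cont by (intro continuous_intros) auto

lemma int_mono:
  fixes x c :: "real \<Rightarrow> real"
  assumes "mono_on {0..1} x" "continuous_on {0..1} c"
  shows "(\<lambda>\<theta>. c \<theta> * x \<theta>) integrable_on {0..1}"
  by (rule int_bm_cont[OF mono_bm[OF assms(1)] _ assms(2)]) (rule mono_bound[OF assms(1)])

lemma xstar_range:
  assumes td: "type_dist F f" and pG: "prize_dist G" and th: "\<theta> \<in> {0..1}"
  shows "0 \<le> xstar F G t \<theta>" "xstar F G t \<theta> \<le> 1"
  using qinv_range[OF pG, of "F \<theta>"] F_range[OF td, of \<theta>] th unfolding xstar_def by auto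

lemma xstar_mono:
  assumes td: "type_dist F f" and pG: "prize_dist G"
  shows "mono_on {0..1} (xstar F G t)"
  unfolding mono_on_def
proof (intro allI impI)
  fix a b :: real assume ab: "a \<in> {0..1} \<and> b \<in> {0..1} \<and> a \<le> b"
  show "xstar F G t a \<le> xstar F G t b"
  proof (cases "a < t")
    case True
    then show ?thesis using xstar_range(1)[OF td pG, of b t] ab by (simp add: xstar_def)
  next
    case False
    then have "\<not> b < t" using ab by auto
    moreover have "F a \<le> F b" "F b \<le> 1" using F_mono[OF td, of a b] F_range[OF td, of b] ab by auto
    ultimately show ?thesis using False qinv_mono[OF pG] by (simp add: xstar_def)
  qed
qed

lemma Gst_eq:
  assumes td: "type_dist F f" and pG: "prize_dist G" and th: "\<theta> \<in> {0..1}" and s: "s \<in> {0..1}"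
  shows "Gst F G t \<theta> s = (if \<theta> < t \<or> F \<theta> \<le> G s then 1 else 0)"
proof (cases "\<theta> < t")
  case True then show ?thesis using s by (simp add: Gst_def step_def xstar_def)
next
  case False
  have "F \<theta> \<le> 1" using F_range[OF td] th by auto
  then show ?thesis using False qinv_le_iff[OF pG _ s, of "F \<theta>"] by (simp add: Gst_def step_def xstar_def)
qed

lemma Gst_cdf:
  assumes td: "type_dist F f" and pG: "prize_dist G" and th: "\<theta> \<in> {0..1}"
  shows "cdf01 (Gst F G t \<theta>)" "xG (Gst F G t) \<theta> = xstar F G t \<theta>"
  unfolding Gst_def xG_def using cdf01_step cdf_mean_step xstar_range[OF td pG th] by auto

lemma Gst_int:
  assumes td: "type_dist F f" and pG: "prize_dist G" and t: "t \<in> {0..1}" and s: "s \<in> {0..1}"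
  shows "((\<lambda>\<theta>. f \<theta> * Gst F G t \<theta> s) has_integral max (F t) (G s)) {0..1}"
proof -
  obtain c where c: "c \<in> {0..1}" "F c = G s" using F_surj[OF td, of "G s"] prizeD(4,5)[OF pG] by metis
  define b where "b = max t c"
  have b: "b \<in> {0..1}" using t c by (auto simp: b_def)
  have Fb: "F b = max (F t) (G s)"
    unfolding b_def using F_mono[OF td, of t c] F_mono[OF td, of c t] t c by (auto simp: max_def)
  have R: "((\<lambda>\<theta>. if \<theta> \<in> {0..b} then f \<theta> else 0) has_integral F b) {0..1}"
  proof -
    have "(f has_integral F b) ({0..b} \<inter> {0..1})" using typeD(6)[OF td b] b by (simp add: Int_absorb2)
    then show ?thesis by (subst has_integral_restrict_Int) 
  qed
  have "((\<lambda>\<theta>. f \<theta> * Gst F G t \<theta> s) has_integral F b) {0..1}"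
  proof (rule has_integral_spike_finite[of "{b}" _ _ "\<lambda>\<theta>. if \<theta> \<in> {0..b} then f \<theta> else 0"])
    show "finite {b}" by simp
    show "((\<lambda>\<theta>. if \<theta> \<in> {0..b} then f \<theta> else 0) has_integral F b) {0..1}" by (rule R)
  next
    fix \<theta> assume th: "\<theta> \<in> {0..1} - {b}"
    then have th1: "\<theta> \<in> {0..1}" by auto
    have "(\<theta> < t \<or> F \<theta> \<le> G s) \<longleftrightarrow> (\<theta> < t \<or> \<theta> \<le> c)"
      using F_less_iff(2)[OF td th1 c(1)] c by simp
    also have "\<dots> \<longleftrightarrow> \<theta> \<in> {0..b}" using th b_def by auto
    finally show "f \<theta> * Gst F G t \<theta> s = (if \<theta> \<in> {0..b} then f \<theta> else 0)"
      using Gst_eq[OF td pG th1 s, of t] by simp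
  qed
  then show ?thesis using Fb by simp
qed

lemma feasible_star:
  assumes td: "type_dist F f" and pG: "prize_dist G" and t: "t \<in> {0..1}"
    and m: "m \<le> EF f (xstar F G t)"
  shows "feasible f G m (Gst F G t) (tst F G t)"
proof -
  let ?x = "xstar F G t"
  have mx: "mono_on {0..1} ?x" by (rule xstar_mono[OF td pG])
  have xr: "\<And>\<theta>. \<theta> \<in> {0..1} \<Longrightarrow> 0 \<le> ?x \<theta> \<and> ?x \<theta> \<le> 1" using xstar_range[OF td pG] by blast
  have X_le: "integral {a..b} ?x \<le> (b - a) * ?x b" and X_ge: "(b - a) * ?x a \<le> integral {a..b} ?x"
    if "0 \<le> a" "a \<le> b" "b \<le> 1" for a b
  proof -
    have mab: "mono_on {a..b} ?x" by (rule mono_on_subset[OF mx]) (use that in auto)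
    have "integral {a..b} ?x \<le> integral {a..b} (\<lambda>_. ?x b)"
      by (rule integral_le[OF integrable_on_mono_on[OF mab] integrable_const_ivl])
         (use mab that in \<open>auto simp: mono_on_def\<close>)
    then show "integral {a..b} ?x \<le> (b - a) * ?x b" using that by simp
    have "integral {a..b} (\<lambda>_. ?x a) \<le> integral {a..b} ?x"
      by (rule integral_le[OF integrable_const_ivl integrable_on_mono_on[OF mab]])
         (use mab that in \<open>auto simp: mono_on_def\<close>)
    then show "(b - a) * ?x a \<le> integral {a..b} ?x" using that by simp
  qed
  have split: "integral {0..b} ?x = integral {0..a} ?x + integral {a..b} ?x" if "0 \<le> a" "a \<le> b" "b \<le> 1" for a b
    using Henstock_Kurzweil_Integration.integral_combine[OF that(1,2) integrable_on_mono_on[OF mono_on_subset[OF mx]]] that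
    by auto
  have xG: "\<And>\<theta>. \<theta> \<in> {0..1} \<Longrightarrow> xG (Gst F G t) \<theta> = ?x \<theta>" using Gst_cdf(2)[OF td pG] by blast
  have Xc: "continuous_on {0..1} (\<lambda>\<theta>. integral {0..\<theta>} ?x)"
    by (rule indefinite_integral_continuous_1[OF integrable_on_mono_on[OF mx]])
  show ?thesis unfolding feasible_def
  proof (intro conjI ballI allI)
    fix \<theta> :: real assume th: "\<theta> \<in> {0..1}"
    show "cdf01 (Gst F G t \<theta>)" using Gst_cdf(1)[OF td pG th] .
    show "tst F G t \<theta> \<ge> 0" using X_le[of 0 \<theta>] th unfolding tst_def by auto
  next
    fix y :: real
    have "EF_ok f (\<lambda>\<theta>. Gst F G t \<theta> y) \<and> EF f (\<lambda>\<theta>. Gst F G t \<theta> y) \<ge> G y"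
    proof (cases "y < 0")
      case True
      have z: "\<And>\<theta>. \<theta> \<in> {0..1} \<Longrightarrow> f \<theta> * Gst F G t \<theta> y = 0"
        using xr True by (force simp: Gst_def step_def)
      have "((\<lambda>\<theta>. f \<theta> * Gst F G t \<theta> y) has_integral 0) {0..1}" using z by (intro has_integral_is_0) auto
      moreover have "G y = 0" using prizeD(1)[OF pG] True unfolding cdf01_def by auto
      ultimately show ?thesis unfolding EF_ok_def EF_def by (auto simp: integral_unique)
    next
      case False
      show ?thesis
      proof (cases "y \<le> 1")
        case True
        then show ?thesis using Gst_int[OF td pG t, of y] False unfolding EF_ok_def EF_def
          by (auto simp: integral_unique)
      next
        case False2: False
        have z: "\<And>\<theta>. \<theta> \<in> {0..1} \<Longrightarrow> f \<theta> * Gst F G t \<theta> y = f \<theta>"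
          using xr False2 by (force simp: Gst_def step_def)
        have "((\<lambda>\<theta>. f \<theta> * Gst F G t \<theta> y) has_integral 1) {0..1}"
          using typeD(6)[OF td, of 1] typeD(2)[OF td] has_integral_eq[of "{0..1}" f "\<lambda>\<theta>. f \<theta> * Gst F G t \<theta> y"] z
          by auto
        moreover have "G y = 1" using prizeD(1)[OF pG] False2 unfolding cdf01_def by auto
        ultimately show ?thesis unfolding EF_ok_def EF_def by (auto simp: integral_unique)
      qed
    qed
    then show "EF_ok f (\<lambda>\<theta>. Gst F G t \<theta> y)" "EF f (\<lambda>\<theta>. Gst F G t \<theta> y) \<ge> G y" by auto
  next
    have i: "(\<lambda>\<theta>. f \<theta> * ?x \<theta>) integrable_on {0..1}" by (rule int_mono[OF mx typeD(4)[OF td]])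
    have e: "\<And>\<theta>. \<theta> \<in> {0..1} \<Longrightarrow> f \<theta> * xG (Gst F G t) \<theta> = f \<theta> * ?x \<theta>" using xG by simp
    show "EF_ok f (xG (Gst F G t))" unfolding EF_ok_def using integrable_eq[OF i] e by (metis (no_types, lifting))
    have "EF f (xG (Gst F G t)) = EF f ?x" unfolding EF_def by (rule integral_cong) (use e in auto)
    then show "EF f (xG (Gst F G t)) \<ge> m" using m by simp
  next
    fix \<theta> \<theta>' :: real assume th: "\<theta> \<in> {0..1}" "\<theta>' \<in> {0..1}"
    have "integral {0..\<theta>} ?x - integral {0..\<theta>'} ?x \<ge> (\<theta> - \<theta>') * ?x \<theta>'"
    proof (cases "\<theta>' \<le> \<theta>")
      case True
      then show ?thesis using split[of \<theta>' \<theta>] X_ge[of \<theta>' \<theta>] th by auto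
    next
      case False
      then show ?thesis using split[of \<theta> \<theta>'] X_le[of \<theta> \<theta>'] th by (auto simp: algebra_simps)
    qed
    then show "\<theta> * xG (Gst F G t) \<theta> - tst F G t \<theta> \<ge> \<theta> * xG (Gst F G t) \<theta>' - tst F G t \<theta>'"
      unfolding tst_def using xG th by (simp add: algebra_simps)
  next
    fix \<theta> :: real assume th: "\<theta> \<in> {0..1}"
    have "integral {0..\<theta>} ?x \<ge> 0"
      by (rule integral_nonneg[OF integrable_on_mono_on[OF mono_on_subset[OF mx]]]) (use th xr in auto)
    then show "\<theta> * xG (Gst F G t) \<theta> - tst F G t \<theta> \<ge> 0" unfolding tst_def using xG th by simp
  next
    have i1: "(\<lambda>\<theta>. (f \<theta> * \<theta>) * ?x \<theta>) integrable_on {0..1}"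
      by (rule int_mono[OF mx]) (use typeD(4)[OF td] in \<open>intro continuous_intros\<close>)
    have i2: "(\<lambda>\<theta>. f \<theta> * integral {0..\<theta>} ?x) integrable_on {0..1}"
      by (rule integrable_continuous_interval) (use typeD(4)[OF td] Xc in \<open>intro continuous_intros\<close>)
    have "(\<lambda>\<theta>. (f \<theta> * \<theta>) * ?x \<theta> - f \<theta> * integral {0..\<theta>} ?x) integrable_on {0..1}"
      using i1 i2 by (rule integrable_diff)
    then show "EF_ok f (tst F G t)" unfolding EF_ok_def tst_def by (simp add: algebra_simps)
  qed
qed

lemma revenue_star:
  assumes td: "type_dist F f" and pG: "prize_dist G"
  shows "EF f (tst F G t) = integral {0..1} (\<lambda>\<theta>. ww F f \<theta> * xstar F G t \<theta>)"
proof -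
  let ?x = "xstar F G t"
  have mx: "mono_on {0..1} ?x" by (rule xstar_mono[OF td pG])
  have Xc: "continuous_on {0..1} (\<lambda>\<theta>. integral {0..\<theta>} ?x)"
    by (rule indefinite_integral_continuous_1[OF integrable_on_mono_on[OF mx]])
  have i1: "(\<lambda>\<theta>. (f \<theta> * \<theta>) * ?x \<theta>) integrable_on {0..1}"
    by (rule int_mono[OF mx]) (use typeD(4)[OF td] in \<open>intro continuous_intros\<close>)
  have i2: "(\<lambda>\<theta>. f \<theta> * integral {0..\<theta>} ?x) integrable_on {0..1}"
    by (rule integrable_continuous_interval) (use typeD(4)[OF td] Xc in \<open>intro continuous_intros\<close>)
  have i3: "(\<lambda>\<theta>. (1 - F \<theta>) * ?x \<theta>) integrable_on {0..1}"
    by (rule int_mono[OF mx]) (use F_cont[OF td] in \<open>intro continuous_intros\<close>)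
  have "EF f (tst F G t) = integral {0..1} (\<lambda>\<theta>. (f \<theta> * \<theta>) * ?x \<theta> - f \<theta> * integral {0..\<theta>} ?x)"
    unfolding EF_def tst_def by (simp add: algebra_simps)
  also have "\<dots> = integral {0..1} (\<lambda>\<theta>. (f \<theta> * \<theta>) * ?x \<theta>) - integral {0..1} (\<lambda>\<theta>. f \<theta> * integral {0..\<theta>} ?x)"
    using i1 i2 by (rule integral_diff)
  also have "integral {0..1} (\<lambda>\<theta>. f \<theta> * integral {0..\<theta>} ?x) = integral {0..1} (\<lambda>\<theta>. (1 - F \<theta>) * ?x \<theta>)"
    by (rule E2[OF td mx])
  also have "integral {0..1} (\<lambda>\<theta>. (f \<theta> * \<theta>) * ?x \<theta>) - integral {0..1} (\<lambda>\<theta>. (1 - F \<theta>) * ?x \<theta>)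
      = integral {0..1} (\<lambda>\<theta>. (f \<theta> * \<theta>) * ?x \<theta> - (1 - F \<theta>) * ?x \<theta>)"
    using i1 i3 by (rule integral_diff[symmetric])
  also have "\<dots> = integral {0..1} (\<lambda>\<theta>. ww F f \<theta> * ?x \<theta>)"
    unfolding ww_def by (simp add: algebra_simps)
  finally show ?thesis .
qed

lemma IC_mono:
  fixes x t :: "real \<Rightarrow> real"
  assumes IC: "\<forall>\<theta>\<in>{0..1}. \<forall>\<theta>'\<in>{0..1}. \<theta> * x \<theta> - t \<theta> \<ge> \<theta> * x \<theta>' - t \<theta>'"
  shows "mono_on {0..1} x"
  unfolding mono_on_def
proof (intro allI impI)
  fix a b :: real assume ab: "a \<in> {0..1} \<and> b \<in> {0..1} \<and> a \<le> b"
  show "x a \<le> x b"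
  proof (cases "a = b")
    case False
    then have lt: "a < b" using ab by auto
    have "b * x b - t b \<ge> b * x a - t a" "a * x a - t a \<ge> a * x b - t b" using IC ab by auto
    then have "(b - a) * (x b - x a) \<ge> 0" by (simp add: algebra_simps)
    then show ?thesis using lt by (simp add: zero_le_mult_iff)
  qed simp
qed

lemma revenue_bound:
  assumes td: "type_dist F f" and fe: "feasible f G m \<Gamma> t"
  shows "EF f t \<le> integral {0..1} (\<lambda>\<theta>. ww F f \<theta> * xG \<Gamma> \<theta>)"
proof -
  let ?x = "xG \<Gamma>"
  have IC: "\<forall>\<theta>\<in>{0..1}. \<forall>\<theta>'\<in>{0..1}. \<theta> * ?x \<theta> - t \<theta> \<ge> \<theta> * ?x \<theta>' - t \<theta>'"
    and IR: "\<forall>\<theta>\<in>{0..1}. \<theta> * ?x \<theta> - t \<theta> \<ge> 0" and it: "EF_ok f t"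
    using fe unfolding feasible_def by auto
  have mx: "mono_on {0..1} ?x" by (rule IC_mono[OF IC])
  have Xc: "continuous_on {0..1} (\<lambda>\<theta>. integral {0..\<theta>} ?x)"
    by (rule indefinite_integral_continuous_1[OF integrable_on_mono_on[OF mx]])
  have i1: "(\<lambda>\<theta>. (f \<theta> * \<theta>) * ?x \<theta>) integrable_on {0..1}"
    by (rule int_mono[OF mx]) (use typeD(4)[OF td] in \<open>intro continuous_intros\<close>)
  have i2: "(\<lambda>\<theta>. f \<theta> * integral {0..\<theta>} ?x) integrable_on {0..1}"
    by (rule integrable_continuous_interval) (use typeD(4)[OF td] Xc in \<open>intro continuous_intros\<close>)
  have i3: "(\<lambda>\<theta>. (1 - F \<theta>) * ?x \<theta>) integrable_on {0..1}"
    by (rule int_mono[OF mx]) (use F_cont[OF td] in \<open>intro continuous_intros\<close>)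
  have i12: "(\<lambda>\<theta>. (f \<theta> * \<theta>) * ?x \<theta> - f \<theta> * integral {0..\<theta>} ?x) integrable_on {0..1}"
    using i1 i2 by (rule integrable_diff)
  have "EF f t \<le> integral {0..1} (\<lambda>\<theta>. (f \<theta> * \<theta>) * ?x \<theta> - f \<theta> * integral {0..\<theta>} ?x)"
    unfolding EF_def
  proof (rule integral_le)
    show "(\<lambda>\<theta>. f \<theta> * t \<theta>) integrable_on {0..1}" using it unfolding EF_ok_def .
    show "(\<lambda>\<theta>. (f \<theta> * \<theta>) * ?x \<theta> - f \<theta> * integral {0..\<theta>} ?x) integrable_on {0..1}" by (rule i12)
    fix \<theta> :: real assume th: "\<theta> \<in> {0..1}"
    have "integral {0..\<theta>} ?x \<le> (\<theta> * ?x \<theta> - t \<theta>) - (0 * ?x 0 - t 0)" by (rule env1[OF mx IC th])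
    moreover have "0 * ?x 0 - t 0 \<ge> 0" using IR[rule_format, of 0] by simp
    ultimately have "t \<theta> \<le> \<theta> * ?x \<theta> - integral {0..\<theta>} ?x" by linarith
    moreover have "f \<theta> \<ge> 0" using typeD(5)[OF td th] .
    ultimately have "f \<theta> * t \<theta> \<le> f \<theta> * (\<theta> * ?x \<theta> - integral {0..\<theta>} ?x)" by (intro mult_left_mono)
    then show "f \<theta> * t \<theta> \<le> (f \<theta> * \<theta>) * ?x \<theta> - f \<theta> * integral {0..\<theta>} ?x" by (simp add: algebra_simps)
  qed
  also have "\<dots> = integral {0..1} (\<lambda>\<theta>. (f \<theta> * \<theta>) * ?x \<theta>) - integral {0..1} (\<lambda>\<theta>. f \<theta> * integral {0..\<theta>} ?x)"
    using i1 i2 by (rule integral_diff)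
  also have "integral {0..1} (\<lambda>\<theta>. f \<theta> * integral {0..\<theta>} ?x) = integral {0..1} (\<lambda>\<theta>. (1 - F \<theta>) * ?x \<theta>)"
    by (rule E2[OF td mx])
  also have "integral {0..1} (\<lambda>\<theta>. (f \<theta> * \<theta>) * ?x \<theta>) - integral {0..1} (\<lambda>\<theta>. (1 - F \<theta>) * ?x \<theta>)
      = integral {0..1} (\<lambda>\<theta>. (f \<theta> * \<theta>) * ?x \<theta> - (1 - F \<theta>) * ?x \<theta>)"
    using i1 i3 by (rule integral_diff[symmetric])
  also have "\<dots> = integral {0..1} (\<lambda>\<theta>. ww F f \<theta> * ?x \<theta>)"
    unfolding ww_def by (simp add: algebra_simps)
  finally show ?thesis .
qed

definition vv :: "(real \<Rightarrow> real) \<Rightarrow> (real \<Rightarrow> real) \<Rightarrow> real \<Rightarrow> real" where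
  "vv F f \<theta> = \<theta> - (1 - F \<theta>) / f \<theta>"

definition Hyp :: "(real \<Rightarrow> real) \<Rightarrow> (real \<Rightarrow> real) \<Rightarrow> real \<Rightarrow> real \<Rightarrow> bool" where
  "Hyp F f l t \<longleftrightarrow> 0 \<le> l \<and> t \<in> {0..1} \<and> (\<forall>\<theta>\<in>{0<..<1}. \<theta> < t \<longrightarrow> vv F f \<theta> + l \<le> 0)
     \<and> (\<forall>\<theta>\<in>{0<..<1}. t < \<theta> \<longrightarrow> 0 \<le> vv F f \<theta> + l)"

lemma vv_mono:
  assumes "myerson_regular F f" "a \<in> {0<..<1}" "b \<in> {0<..<1}" "a \<le> b"
  shows "vv F f a \<le> vv F f b"
  using assms unfolding myerson_regular_def mono_on_def vv_def by blast

lemma ww_vv: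
  assumes td: "type_dist F f" and mr: "myerson_regular F f" and th: "\<theta> \<in> {0<..<1}"
  shows "ww F f \<theta> = f \<theta> * vv F f \<theta>"
  using f_pos[OF td mr th] unfolding ww_def vv_def by (simp add: field_simps)

lemma exch:
  fixes a :: "real \<Rightarrow> real" and \<Gamma> :: "real \<Rightarrow> real \<Rightarrow> real"
  assumes cdf: "\<forall>\<theta>\<in>{0..1}. cdf01 (\<Gamma> \<theta>)"
    and ia: "a integrable_on {0..1}" and iabs: "(\<lambda>\<theta>. \<bar>a \<theta>\<bar>) integrable_on {0..1}"
    and iG: "\<And>s. (\<lambda>\<theta>. a \<theta> * \<Gamma> \<theta> s) integrable_on {0..1}"
    and im: "(\<lambda>\<theta>. a \<theta> * xG \<Gamma> \<theta>) integrable_on {0..1}"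
    and n: "n > 0"
  shows "\<bar>integral {0..1} (\<lambda>\<theta>. a \<theta> * xG \<Gamma> \<theta>)
      - (integral {0..1} a - (\<Sum>k<n. integral {0..1} (\<lambda>\<theta>. a \<theta> * \<Gamma> \<theta> (real (Suc k) / real n))) / real n)\<bar>
     \<le> integral {0..1} (\<lambda>\<theta>. \<bar>a \<theta>\<bar>) / real n"
proof -
  define A where "A \<theta> = a \<theta> - (\<Sum>k<n. a \<theta> * \<Gamma> \<theta> (real (Suc k) / real n)) / real n" for \<theta>
  have isum: "(\<lambda>\<theta>. \<Sum>k<n. a \<theta> * \<Gamma> \<theta> (real (Suc k) / real n)) integrable_on {0..1}"
    by (rule integrable_sum) (auto intro: iG)
  have iA: "A integrable_on {0..1}" unfolding A_def
    by (intro integrable_diff ia) (use isum in \<open>simp add: divide_inverse integrable_on_mult_left\<close>)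
  have intA: "integral {0..1} A = integral {0..1} a - (\<Sum>k<n. integral {0..1} (\<lambda>\<theta>. a \<theta> * \<Gamma> \<theta> (real (Suc k) / real n))) / real n"
  proof -
    have "integral {0..1} A = integral {0..1} a - integral {0..1} (\<lambda>\<theta>. (\<Sum>k<n. a \<theta> * \<Gamma> \<theta> (real (Suc k) / real n)) / real n)"
      unfolding A_def by (rule integral_diff[OF ia]) (use isum in \<open>simp add: divide_inverse integrable_on_mult_left\<close>)
    also have "integral {0..1} (\<lambda>\<theta>. (\<Sum>k<n. a \<theta> * \<Gamma> \<theta> (real (Suc k) / real n)) / real n)
       = (\<Sum>k<n. integral {0..1} (\<lambda>\<theta>. a \<theta> * \<Gamma> \<theta> (real (Suc k) / real n))) / real n"
      by (simp add: integral_sum iG)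
    finally show ?thesis .
  qed
  have pw: "\<bar>a \<theta> * xG \<Gamma> \<theta> - A \<theta>\<bar> \<le> \<bar>a \<theta>\<bar> / real n" if th: "\<theta> \<in> {0..1}" for \<theta>
  proof -
    have c: "cdf01 (\<Gamma> \<theta>)" using cdf th by blast
    have "A \<theta> = a \<theta> * (1 - Dn n (\<Gamma> \<theta>))"
      unfolding A_def Dn_def by (simp add: sum_distrib_left algebra_simps)
    then have "a \<theta> * xG \<Gamma> \<theta> - A \<theta> = a \<theta> * (xG \<Gamma> \<theta> - (1 - Dn n (\<Gamma> \<theta>)))" by (simp add: algebra_simps)
    moreover have b: "\<bar>xG \<Gamma> \<theta> - (1 - Dn n (\<Gamma> \<theta>))\<bar> \<le> 1 / real n"
      using cdf_mean_bounds[OF c n] unfolding xG_def by linarith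
    moreover have "\<bar>a \<theta>\<bar> * \<bar>xG \<Gamma> \<theta> - (1 - Dn n (\<Gamma> \<theta>))\<bar> \<le> \<bar>a \<theta>\<bar> * (1 / real n)"
      by (rule mult_left_mono[OF b]) simp
    ultimately have "\<bar>a \<theta> * xG \<Gamma> \<theta> - A \<theta>\<bar> \<le> \<bar>a \<theta>\<bar> * (1 / real n)"
      by (simp add: abs_mult)
    then show ?thesis by simp
  qed
  have "\<bar>integral {0..1} (\<lambda>\<theta>. a \<theta> * xG \<Gamma> \<theta> - A \<theta>)\<bar> \<le> integral {0..1} (\<lambda>\<theta>. \<bar>a \<theta>\<bar> / real n)"
    using integral_norm_bound_integral[of "\<lambda>\<theta>. a \<theta> * xG \<Gamma> \<theta> - A \<theta>" "{0..1}" "\<lambda>\<theta>. \<bar>a \<theta>\<bar> / real n"]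
      integrable_diff[OF im iA] iabs pw by (simp add: divide_inverse integrable_on_mult_left)
  moreover have "integral {0..1} (\<lambda>\<theta>. a \<theta> * xG \<Gamma> \<theta> - A \<theta>) = integral {0..1} (\<lambda>\<theta>. a \<theta> * xG \<Gamma> \<theta>) - integral {0..1} A"
    by (rule integral_diff[OF im iA])
  ultimately show ?thesis using intA by simp
qed

lemma bathtub:
  assumes td: "type_dist F f" and mr: "myerson_regular F f" and pG: "prize_dist G"
    and H: "Hyp F f l t" and s: "s \<in> {0..1}"
    and h: "\<And>\<theta>. \<theta> \<in> {0..1} \<Longrightarrow> 0 \<le> h \<theta> \<and> h \<theta> \<le> 1"
    and ih1: "(\<lambda>\<theta>. f \<theta> * h \<theta>) integrable_on {0..1}"
    and ih2: "(\<lambda>\<theta>. (ww F f \<theta> + l * f \<theta>) * h \<theta>) integrable_on {0..1}"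
    and fh: "integral {0..1} (\<lambda>\<theta>. f \<theta> * h \<theta>) \<ge> G s"
  shows "integral {0..1} (\<lambda>\<theta>. (ww F f \<theta> + l * f \<theta>) * Gst F G t \<theta> s)
     \<le> integral {0..1} (\<lambda>\<theta>. (ww F f \<theta> + l * f \<theta>) * h \<theta>)"
proof -
  define c where "c \<theta> = ww F f \<theta> + l * f \<theta>" for \<theta>
  define g where "g \<theta> = Gst F G t \<theta> s" for \<theta>
  have l: "0 \<le> l" and t: "t \<in> {0..1}"
    and H1: "\<And>\<theta>. \<theta> \<in> {0<..<1} \<Longrightarrow> \<theta> < t \<Longrightarrow> vv F f \<theta> + l \<le> 0"
    and H2: "\<And>\<theta>. \<theta> \<in> {0<..<1} \<Longrightarrow> t < \<theta> \<Longrightarrow> 0 \<le> vv F f \<theta> + l"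
    using H unfolding Hyp_def by auto
  obtain cs where cs: "cs \<in> {0..1}" "F cs = G s" using F_surj[OF td, of "G s"] prizeD(4,5)[OF pG] by metis
  define b where "b = max t cs"
  have geq: "g \<theta> = (if \<theta> < t \<or> \<theta> \<le> cs then 1 else 0)" if th: "\<theta> \<in> {0..1}" for \<theta>
    unfolding g_def Gst_eq[OF td pG th s] using F_less_iff(2)[OF td th cs(1)] cs by simp
  have cc: "continuous_on {0..1} c" unfolding c_def using ww_cont[OF td] typeD(4)[OF td]
    by (intro continuous_intros) auto
  have gm: "g \<in> borel_measurable (lebesgue_on {0..1})"
    by (rule antimono_bm) (auto simp: geq)
  have gb: "\<And>\<theta>. \<theta> \<in> {0..1} \<Longrightarrow> \<bar>g \<theta>\<bar> \<le> 1" by (simp add: geq)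
  have icg: "(\<lambda>\<theta>. c \<theta> * g \<theta>) integrable_on {0..1}" by (rule int_bm_cont[OF gm gb cc])
  have ifg: "(\<lambda>\<theta>. f \<theta> * g \<theta>) integrable_on {0..1}" by (rule int_bm_cont[OF gm gb typeD(4)[OF td]])
  have Ifg: "integral {0..1} (\<lambda>\<theta>. f \<theta> * g \<theta>) = max (F t) (G s)"
    unfolding g_def using Gst_int[OF td pG t s] by (simp add: integral_unique)
  obtain \<kappa> where k0: "0 \<le> \<kappa>" and kF: "\<kappa> * (integral {0..1} (\<lambda>\<theta>. f \<theta> * h \<theta>) - max (F t) (G s)) \<ge> 0"
    and klo: "\<And>\<theta>. \<theta> \<in> {0<..<1} \<Longrightarrow> \<theta> < b \<Longrightarrow> vv F f \<theta> + l \<le> \<kappa>"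
    and khi: "\<And>\<theta>. \<theta> \<in> {0<..<1} \<Longrightarrow> b < \<theta> \<Longrightarrow> \<kappa> \<le> vv F f \<theta> + l"
  proof (cases "G s \<le> F t")
    case True
    then have "cs \<le> t" using F_less_iff(2)[OF td cs(1) t] cs by simp
    then have "b = t" unfolding b_def by simp
    then show ?thesis using that[of 0] H1 H2 by auto
  next
    case False
    then have ct: "t < cs" using F_less_iff(1)[OF td t cs(1)] cs by simp
    then have bc: "b = cs" unfolding b_def by simp
    have mx: "max (F t) (G s) = G s" using False by simp
    show ?thesis
    proof (cases "cs < 1")
      case True
      have csin: "cs \<in> {0<..<1}" using True ct t by auto
      show ?thesis
      proof (rule that[of "vv F f cs + l"])
        show "0 \<le> vv F f cs + l" using H2[OF csin ct] .
        show "0 \<le> (vv F f cs + l) * (integral {0..1} (\<lambda>\<theta>. f \<theta> * h \<theta>) - max (F t) (G s))"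
          using H2[OF csin ct] fh mx by simp
        fix \<theta> :: real assume th: "\<theta> \<in> {0<..<1}"
        show "\<theta> < b \<Longrightarrow> vv F f \<theta> + l \<le> vv F f cs + l" using vv_mono[OF mr th csin] bc by simp
        show "b < \<theta> \<Longrightarrow> vv F f cs + l \<le> vv F f \<theta> + l" using vv_mono[OF mr csin th] bc by simp
      qed
    next
      case False
      then have cs1: "cs = 1" using cs by simp
      show ?thesis
      proof (rule that[of "1 + l"])
        show "0 \<le> 1 + l" using l by simp
        show "0 \<le> (1 + l) * (integral {0..1} (\<lambda>\<theta>. f \<theta> * h \<theta>) - max (F t) (G s))"
          using l fh mx by simp
        fix \<theta> :: real assume th: "\<theta> \<in> {0<..<1}"
        have "0 \<le> (1 - F \<theta>) / f \<theta>" using F_range[OF td, of \<theta>] f_pos[OF td mr th] th by simp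
        then show "\<theta> < b \<Longrightarrow> vv F f \<theta> + l \<le> 1 + l" using th unfolding vv_def by simp
        show "b < \<theta> \<Longrightarrow> 1 + l \<le> vv F f \<theta> + l" using th bc cs1 by simp
      qed
    qed
  qed
  have pw: "0 \<le> (c \<theta> - \<kappa> * f \<theta>) * (h \<theta> - g \<theta>)" if th: "\<theta> \<in> {0..1} - {0, 1, b}" for \<theta>
  proof -
    have th1: "\<theta> \<in> {0<..<1}" and th0: "\<theta> \<in> {0..1}" and tb: "\<theta> \<noteq> b" using th by auto
    have fp: "f \<theta> > 0" using f_pos[OF td mr th1] .
    have ceq: "c \<theta> - \<kappa> * f \<theta> = f \<theta> * (vv F f \<theta> + l - \<kappa>)"
      unfolding c_def ww_vv[OF td mr th1] by (simp add: algebra_simps)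
    show ?thesis
    proof (cases "\<theta> < b")
      case True
      then have "g \<theta> = 1" unfolding geq[OF th0] b_def by auto
      moreover have "vv F f \<theta> + l - \<kappa> \<le> 0" using klo[OF th1 True] by simp
      ultimately show ?thesis unfolding ceq using fp h[OF th0]
        by (simp add: mult_nonpos_nonpos mult_nonneg_nonpos)
    next
      case False
      then have bt: "b < \<theta>" using tb by simp
      then have "g \<theta> = 0" unfolding geq[OF th0] b_def by auto
      moreover have "vv F f \<theta> + l - \<kappa> \<ge> 0" using khi[OF th1 bt] by simp
      ultimately show ?thesis unfolding ceq using fp h[OF th0] by simp
    qed
  qed
  have i1: "(\<lambda>\<theta>. (c \<theta> - \<kappa> * f \<theta>) * (h \<theta> - g \<theta>)) integrable_on {0..1}"
  proof -
    have "(\<lambda>\<theta>. (c \<theta> * h \<theta> - c \<theta> * g \<theta>) - \<kappa> * (f \<theta> * h \<theta> - f \<theta> * g \<theta>)) integrable_on {0..1}"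
      using ih2 icg ih1 ifg unfolding c_def
      by (intro integrable_diff integrable_on_mult_right) auto
    then show ?thesis by (simp add: algebra_simps)
  qed
  have "0 \<le> integral {0..1} (\<lambda>\<theta>. (c \<theta> - \<kappa> * f \<theta>) * (h \<theta> - g \<theta>))"
  proof -
    have "integral {0..1} (\<lambda>\<theta>. (c \<theta> - \<kappa> * f \<theta>) * (h \<theta> - g \<theta>))
        = integral {0..1} (\<lambda>\<theta>. if \<theta> \<in> {0, 1, b} then 0 else (c \<theta> - \<kappa> * f \<theta>) * (h \<theta> - g \<theta>))"
      by (rule integral_spike[of "{0, 1, b}"]) auto
    also have "\<dots> \<ge> 0"
    proof (rule integral_nonneg)
      show "(\<lambda>\<theta>. if \<theta> \<in> {0, 1, b} then 0 else (c \<theta> - \<kappa> * f \<theta>) * (h \<theta> - g \<theta>)) integrable_on {0..1}"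
        by (rule integrable_spike_finite[OF _ _ i1, of "{0,1,b}"]) auto
      fix \<theta> :: real assume "\<theta> \<in> {0..1}"
      then show "0 \<le> (if \<theta> \<in> {0, 1, b} then 0 else (c \<theta> - \<kappa> * f \<theta>) * (h \<theta> - g \<theta>))"
        using pw by auto
    qed
    finally show ?thesis .
  qed
  also have "integral {0..1} (\<lambda>\<theta>. (c \<theta> - \<kappa> * f \<theta>) * (h \<theta> - g \<theta>))
    = (integral {0..1} (\<lambda>\<theta>. c \<theta> * h \<theta>) - integral {0..1} (\<lambda>\<theta>. c \<theta> * g \<theta>))
      - \<kappa> * (integral {0..1} (\<lambda>\<theta>. f \<theta> * h \<theta>) - integral {0..1} (\<lambda>\<theta>. f \<theta> * g \<theta>))"
  proof -
    have "(\<lambda>\<theta>. (c \<theta> - \<kappa> * f \<theta>) * (h \<theta> - g \<theta>)) = (\<lambda>\<theta>. (c \<theta> * h \<theta> - c \<theta> * g \<theta>) - \<kappa> * (f \<theta> * h \<theta> - f \<theta> * g \<theta>))"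
      by (simp add: fun_eq_iff algebra_simps)
    moreover have "integral {0..1} (\<lambda>\<theta>. (c \<theta> * h \<theta> - c \<theta> * g \<theta>) - \<kappa> * (f \<theta> * h \<theta> - f \<theta> * g \<theta>))
      = integral {0..1} (\<lambda>\<theta>. c \<theta> * h \<theta> - c \<theta> * g \<theta>) - \<kappa> * integral {0..1} (\<lambda>\<theta>. f \<theta> * h \<theta> - f \<theta> * g \<theta>)"
      using ih2 icg ih1 ifg unfolding c_def
      by (subst integral_diff) (auto intro!: integrable_diff integrable_on_mult_right)
    moreover have "integral {0..1} (\<lambda>\<theta>. c \<theta> * h \<theta> - c \<theta> * g \<theta>) = integral {0..1} (\<lambda>\<theta>. c \<theta> * h \<theta>) - integral {0..1} (\<lambda>\<theta>. c \<theta> * g \<theta>)"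
      using ih2 icg unfolding c_def by (intro integral_diff) auto
    moreover have "integral {0..1} (\<lambda>\<theta>. f \<theta> * h \<theta> - f \<theta> * g \<theta>) = integral {0..1} (\<lambda>\<theta>. f \<theta> * h \<theta>) - integral {0..1} (\<lambda>\<theta>. f \<theta> * g \<theta>)"
      using ih1 ifg by (intro integral_diff) auto
    ultimately show ?thesis by simp
  qed
  finally have "0 \<le> (integral {0..1} (\<lambda>\<theta>. c \<theta> * h \<theta>) - integral {0..1} (\<lambda>\<theta>. c \<theta> * g \<theta>))
      - \<kappa> * (integral {0..1} (\<lambda>\<theta>. f \<theta> * h \<theta>) - max (F t) (G s))" unfolding Ifg .
  then show ?thesis using kF unfolding c_def g_def by linarith
qed

lemma Gst_antimono:
  assumes td: "type_dist F f" and pG: "prize_dist G" and that: "u \<in> {0..1}" "v \<in> {0..1}" "u \<le> v"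
  shows "Gst F G t v s \<le> Gst F G t u s"
proof -
  have "xstar F G t u \<le> xstar F G t v" using xstar_mono[OF td pG] that unfolding mono_on_def by blast
  then show ?thesis unfolding Gst_def step_def by auto
qed

lemma Gst_bm:
  assumes td: "type_dist F f" and pG: "prize_dist G"
  shows "(\<lambda>\<theta>. Gst F G t \<theta> s) \<in> borel_measurable (lebesgue_on {0..1})"
  by (rule antimono_bm) (rule Gst_antimono[OF td pG])

lemma Gst_int_c:
  assumes td: "type_dist F f" and pG: "prize_dist G" and c: "continuous_on {0..1} c"
  shows "(\<lambda>\<theta>. c \<theta> * Gst F G t \<theta> s) integrable_on {0..1}"
  by (rule int_bm_cont[OF Gst_bm[OF td pG] _ c, where B=1]) (auto simp: Gst_def step_def)

lemma opt:
  assumes td: "type_dist F f" and mr: "myerson_regular F f" and pG: "prize_dist G"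
    and H: "Hyp F f l t" and fe: "feasible f G m \<Gamma> t'"
  shows "EF f t' \<le> integral {0..1} (\<lambda>\<theta>. ww F f \<theta> * xstar F G t \<theta>) + l * (EF f (xstar F G t) - m)"
proof -
  let ?x = "xG \<Gamma>" and ?y = "xstar F G t"
  define c where "c \<theta> = ww F f \<theta> + l * f \<theta>" for \<theta>
  have l: "0 \<le> l" and t: "t \<in> {0..1}" using H unfolding Hyp_def by auto
  have cdf: "\<forall>\<theta>\<in>{0..1}. cdf01 (\<Gamma> \<theta>)"
    and F1: "\<And>s. EF_ok f (\<lambda>\<theta>. \<Gamma> \<theta> s) \<and> EF f (\<lambda>\<theta>. \<Gamma> \<theta> s) \<ge> G s"
    and F2: "EF_ok f ?x" "EF f ?x \<ge> m"
    and IC: "\<forall>\<theta>\<in>{0..1}. \<forall>\<theta>'\<in>{0..1}. \<theta> * ?x \<theta> - t' \<theta> \<ge> \<theta> * ?x \<theta>' - t' \<theta>'"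
    using fe unfolding feasible_def by auto
  have mx: "mono_on {0..1} ?x" by (rule IC_mono[OF IC])
  have my: "mono_on {0..1} ?y" by (rule xstar_mono[OF td pG])
  have cc: "continuous_on {0..1} c" unfolding c_def using ww_cont[OF td] typeD(4)[OF td]
    by (intro continuous_intros) auto
  have ccabs: "continuous_on {0..1} (\<lambda>\<theta>. \<bar>c \<theta>\<bar>)" using cc by (intro continuous_intros)
  have rb: "EF f t' \<le> integral {0..1} (\<lambda>\<theta>. ww F f \<theta> * ?x \<theta>)" by (rule revenue_bound[OF td fe])
  have lin: "integral {0..1} (\<lambda>\<theta>. c \<theta> * z \<theta>) = integral {0..1} (\<lambda>\<theta>. ww F f \<theta> * z \<theta>) + l * EF f z"
    if "mono_on {0..1} z" for z
  proof -
    have i1: "(\<lambda>\<theta>. ww F f \<theta> * z \<theta>) integrable_on {0..1}" by (rule int_mono[OF that ww_cont[OF td]])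
    have i2: "(\<lambda>\<theta>. l * (f \<theta> * z \<theta>)) integrable_on {0..1}"
      by (rule integrable_on_mult_right, rule int_mono[OF that typeD(4)[OF td]])
    have "integral {0..1} (\<lambda>\<theta>. c \<theta> * z \<theta>) = integral {0..1} (\<lambda>\<theta>. ww F f \<theta> * z \<theta> + l * (f \<theta> * z \<theta>))"
      unfolding c_def by (simp add: algebra_simps)
    also have "\<dots> = integral {0..1} (\<lambda>\<theta>. ww F f \<theta> * z \<theta>) + integral {0..1} (\<lambda>\<theta>. l * (f \<theta> * z \<theta>))"
      by (rule integral_add[OF i1 i2])
    finally show ?thesis unfolding EF_def by simp
  qed
  have main: "integral {0..1} (\<lambda>\<theta>. c \<theta> * ?x \<theta>) \<le> integral {0..1} (\<lambda>\<theta>. c \<theta> * ?y \<theta>)"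
  proof (rule lim_le[where c="2 * integral {0..1} (\<lambda>\<theta>. \<bar>c \<theta>\<bar>)"])
    fix n :: nat assume n: "n > 0"
    let ?C = "integral {0..1} (\<lambda>\<theta>. \<bar>c \<theta>\<bar>)"
    have ia: "c integrable_on {0..1}" using cc by (rule integrable_continuous_interval)
    have iabs: "(\<lambda>\<theta>. \<bar>c \<theta>\<bar>) integrable_on {0..1}" using ccabs by (rule integrable_continuous_interval)
    have Gm: "(\<lambda>\<theta>. \<Gamma> \<theta> s) \<in> borel_measurable (lebesgue_on {0..1})" for s
      by (rule bm_div[OF td mr]) (use F1[of s] in \<open>simp add: EF_ok_def\<close>)
    have Gb: "\<And>\<theta>. \<theta> \<in> {0..1} \<Longrightarrow> \<bar>\<Gamma> \<theta> s\<bar> \<le> 1" for s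
      using cdf cdf01_range by (metis abs_of_nonneg)
    have iG1: "(\<lambda>\<theta>. c \<theta> * \<Gamma> \<theta> s) integrable_on {0..1}" for s by (rule int_bm_cont[OF Gm Gb cc])
    have im1: "(\<lambda>\<theta>. c \<theta> * ?x \<theta>) integrable_on {0..1}" by (rule int_mono[OF mx cc])
    note ex1 = exch[OF cdf ia iabs iG1 im1 n]
    have cdf2: "\<forall>\<theta>\<in>{0..1}. cdf01 (Gst F G t \<theta>)" using Gst_cdf(1)[OF td pG] by blast
    have iG2: "(\<lambda>\<theta>. c \<theta> * Gst F G t \<theta> s) integrable_on {0..1}" for s by (rule Gst_int_c[OF td pG cc])
    have xGe: "\<And>\<theta>. \<theta> \<in> {0..1} \<Longrightarrow> c \<theta> * ?y \<theta> = c \<theta> * xG (Gst F G t) \<theta>"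
      using Gst_cdf(2)[OF td pG] by simp
    have im2: "(\<lambda>\<theta>. c \<theta> * xG (Gst F G t) \<theta>) integrable_on {0..1}"
      by (rule integrable_eq[OF int_mono[OF my cc] xGe])
    note ex2 = exch[OF cdf2 ia iabs iG2 im2 n]
    have eqy: "integral {0..1} (\<lambda>\<theta>. c \<theta> * xG (Gst F G t) \<theta>) = integral {0..1} (\<lambda>\<theta>. c \<theta> * ?y \<theta>)"
      by (rule integral_cong) (rule sym, erule xGe)
    have bt: "integral {0..1} (\<lambda>\<theta>. c \<theta> * Gst F G t \<theta> (real (Suc k) / real n))
        \<le> integral {0..1} (\<lambda>\<theta>. c \<theta> * \<Gamma> \<theta> (real (Suc k) / real n))" if k: "k \<in> {..<n}" for k
    proof -
      let ?s = "real (Suc k) / real n"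
      have s: "?s \<in> {0..1}" using k n by auto
      show ?thesis unfolding c_def
      proof (rule bathtub[OF td mr pG H s])
        fix \<theta> :: real assume "\<theta> \<in> {0..1}"
        then show "0 \<le> \<Gamma> \<theta> ?s \<and> \<Gamma> \<theta> ?s \<le> 1" using cdf cdf01_range by blast
      next
        show "(\<lambda>\<theta>. f \<theta> * \<Gamma> \<theta> ?s) integrable_on {0..1}" using F1[of ?s] unfolding EF_ok_def by blast
        show "(\<lambda>\<theta>. (ww F f \<theta> + l * f \<theta>) * \<Gamma> \<theta> ?s) integrable_on {0..1}" using iG1[of ?s] unfolding c_def .
        show "G ?s \<le> integral {0..1} (\<lambda>\<theta>. f \<theta> * \<Gamma> \<theta> ?s)" using F1[of ?s] unfolding EF_def by blast
      qed
    qed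
    have "(\<Sum>k<n. integral {0..1} (\<lambda>\<theta>. c \<theta> * Gst F G t \<theta> (real (Suc k) / real n)))
       \<le> (\<Sum>k<n. integral {0..1} (\<lambda>\<theta>. c \<theta> * \<Gamma> \<theta> (real (Suc k) / real n)))"
      by (rule sum_mono) (rule bt)
    then have "(\<Sum>k<n. integral {0..1} (\<lambda>\<theta>. c \<theta> * Gst F G t \<theta> (real (Suc k) / real n))) / real n
       \<le> (\<Sum>k<n. integral {0..1} (\<lambda>\<theta>. c \<theta> * \<Gamma> \<theta> (real (Suc k) / real n))) / real n"
      using n by (simp add: divide_right_mono)
    then show "integral {0..1} (\<lambda>\<theta>. c \<theta> * ?x \<theta>) \<le> integral {0..1} (\<lambda>\<theta>. c \<theta> * ?y \<theta>) + 2 * ?C / real n"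
      using ex1 ex2 eqy by (simp add: abs_le_iff)
  qed
  have "EF f t' \<le> integral {0..1} (\<lambda>\<theta>. c \<theta> * ?x \<theta>) - l * EF f ?x" using rb lin[OF mx] by simp
  also have "\<dots> \<le> integral {0..1} (\<lambda>\<theta>. c \<theta> * ?x \<theta>) - l * m" using F2 l by (simp add: mult_left_mono)
  also have "\<dots> \<le> integral {0..1} (\<lambda>\<theta>. c \<theta> * ?y \<theta>) - l * m" using main by simp
  also have "\<dots> = integral {0..1} (\<lambda>\<theta>. ww F f \<theta> * ?y \<theta>) + l * (EF f ?y - m)"
    using lin[OF my] by (simp add: algebra_simps)
  finally show ?thesis .
qed

definition Qf :: "(real \<Rightarrow> real) \<Rightarrow> real \<Rightarrow> real" where
  "Qf G q = integral {q..1} (qinv G)"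

definition An :: "(real \<Rightarrow> real) \<Rightarrow> real \<Rightarrow> nat \<Rightarrow> real" where
  "An G q n = 1 - (\<Sum>k<n. max q (G (real (Suc k) / real n))) / real n"

lemma qinv_mono_on: "prize_dist G \<Longrightarrow> mono_on {0..1} (qinv G)"
  unfolding mono_on_def using qinv_mono by auto

lemma qinv_int: "prize_dist G \<Longrightarrow> 0 \<le> a \<Longrightarrow> b \<le> 1 \<Longrightarrow> qinv G integrable_on {a..b}"
  by (rule integrable_on_mono_on, rule mono_on_subset[OF qinv_mono_on]) auto

lemma I_Ginv_eq:
  assumes pG: "prize_dist G" and q: "q \<in> {0..1}"
  shows "I_Ginv G q = - Qf G q"
  using Henstock_Kurzweil_Integration.integral_combine[of 0 q 1 "qinv G"] qinv_int[OF pG, of 0 1] q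
  unfolding I_Ginv_def Qf_def by auto

lemma Q_diff:
  assumes pG: "prize_dist G" and q: "0 \<le> q1" "q1 \<le> q2" "q2 \<le> 1"
  shows "0 \<le> Qf G q1 - Qf G q2" "Qf G q1 - Qf G q2 \<le> q2 - q1"
proof -
  have "Qf G q1 = integral {q1..q2} (qinv G) + Qf G q2"
    using Henstock_Kurzweil_Integration.integral_combine[of q1 q2 1 "qinv G"] qinv_int[OF pG, of q1 1] q
    unfolding Qf_def by auto
  moreover have "0 \<le> integral {q1..q2} (qinv G)"
    by (rule integral_nonneg[OF qinv_int[OF pG]]) (use q qinv_range[OF pG] in auto)
  moreover have "integral {q1..q2} (qinv G) \<le> integral {q1..q2} (\<lambda>_. 1)"
    by (rule integral_le[OF qinv_int[OF pG] integrable_const_ivl]) (use q qinv_range[OF pG] in auto)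
  ultimately show "0 \<le> Qf G q1 - Qf G q2" "Qf G q1 - Qf G q2 \<le> q2 - q1" using q by auto
qed

lemma approx_eq:
  fixes a b :: real
  assumes "\<And>n. n > 0 \<Longrightarrow> \<bar>a - c n\<bar> \<le> 1 / real n" "\<And>n. n > 0 \<Longrightarrow> \<bar>b - c n\<bar> \<le> 1 / real n"
  shows "a = b"
proof -
  have "a \<le> b"
  proof (rule lim_le[where c=2])
    fix n :: nat assume n: "n > 0"
    have "a - c n \<le> 1 / real n" "c n - b \<le> 1 / real n" using assms(1)[OF n] assms(2)[OF n] by (auto simp: abs_le_iff)
    moreover have "2 / real n = 1 / real n + 1 / real n" by simp
    ultimately show "a \<le> b + 2 / real n" by linarith
  qed
  moreover have "b \<le> a"
  proof (rule lim_le[where c=2])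
    fix n :: nat assume n: "n > 0"
    have "b - c n \<le> 1 / real n" "c n - a \<le> 1 / real n" using assms(1)[OF n] assms(2)[OF n] by (auto simp: abs_le_iff)
    moreover have "2 / real n = 1 / real n + 1 / real n" by simp
    ultimately show "b \<le> a + 2 / real n" by linarith
  qed
  ultimately show ?thesis by simp
qed

lemma R_approx:
  assumes td: "type_dist F f" and pG: "prize_dist G" and t: "t \<in> {0..1}" and n: "n > 0"
  shows "\<bar>EF f (xstar F G t) - An G (F t) n\<bar> \<le> 1 / real n"
proof -
  have cdf2: "\<forall>\<theta>\<in>{0..1}. cdf01 (Gst F G t \<theta>)" using Gst_cdf(1)[OF td pG] by blast
  have fc: "continuous_on {0..1} f" using typeD(4)[OF td] .
  have ia: "f integrable_on {0..1}" using fc by (rule integrable_continuous_interval)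
  have fcabs: "continuous_on {0..1} (\<lambda>\<theta>. \<bar>f \<theta>\<bar>)" using fc by (intro continuous_intros)
  have iabs: "(\<lambda>\<theta>. \<bar>f \<theta>\<bar>) integrable_on {0..1}" using fcabs by (rule integrable_continuous_interval)
  have iG: "(\<lambda>\<theta>. f \<theta> * Gst F G t \<theta> s) integrable_on {0..1}" for s by (rule Gst_int_c[OF td pG fc])
  have xGe: "\<And>\<theta>. \<theta> \<in> {0..1} \<Longrightarrow> f \<theta> * xstar F G t \<theta> = f \<theta> * xG (Gst F G t) \<theta>"
    using Gst_cdf(2)[OF td pG] by simp
  have im: "(\<lambda>\<theta>. f \<theta> * xG (Gst F G t) \<theta>) integrable_on {0..1}"
    by (rule integrable_eq[OF int_mono[OF xstar_mono[OF td pG] fc] xGe])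
  note ex = exch[OF cdf2 ia iabs iG im n]
  have e1: "integral {0..1} (\<lambda>\<theta>. f \<theta> * xG (Gst F G t) \<theta>) = EF f (xstar F G t)"
    unfolding EF_def by (rule integral_cong) (rule sym, erule xGe)
  have e2: "integral {0..1} f = 1" using typeD(6)[OF td, of 1] typeD(2)[OF td] by (simp add: integral_unique)
  have e3: "integral {0..1} (\<lambda>\<theta>. \<bar>f \<theta>\<bar>) = 1"
  proof -
    have "integral {0..1} (\<lambda>\<theta>. \<bar>f \<theta>\<bar>) = integral {0..1} f"
      by (rule integral_cong) (use typeD(5)[OF td] in simp)
    then show ?thesis using e2 by simp
  qed
  have e4: "integral {0..1} (\<lambda>\<theta>. f \<theta> * Gst F G t \<theta> (real (Suc k) / real n)) = max (F t) (G (real (Suc k) / real n))"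
    if "k \<in> {..<n}" for k
    using Gst_int[OF td pG t, of "real (Suc k) / real n"] that n by (simp add: integral_unique)
  have se: "(\<Sum>k<n. integral {0..1} (\<lambda>\<theta>. f \<theta> * Gst F G t \<theta> (real (Suc k) / real n)))
     = (\<Sum>k<n. max (F t) (G (real (Suc k) / real n)))" by (rule sum.cong[OF refl e4])
  show ?thesis using ex unfolding e1 e2 e3 se An_def by simp
qed

lemma Q_approx:
  assumes pG: "prize_dist G" and q: "q \<in> {0..1}" and n: "n > 0"
  shows "\<bar>Qf G q - An G q n\<bar> \<le> 1 / real n"
proof -
  define a where "a p = (if q \<le> p then 1 else 0 :: real)" for p
  define \<Gamma> where "\<Gamma> p = step (qinv G p)" for p
  have qr: "\<And>p. p \<in> {0..1} \<Longrightarrow> 0 \<le> qinv G p \<and> qinv G p \<le> 1" using qinv_range[OF pG] by auto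
  have cdf: "\<forall>p\<in>{0..1}. cdf01 (\<Gamma> p)" unfolding \<Gamma>_def using cdf01_step qr by blast
  have am: "mono_on {0..1} a" unfolding a_def mono_on_def by auto
  have ia: "a integrable_on {0..1}" by (rule integrable_on_mono_on[OF am])
  have aabs: "(\<lambda>p. \<bar>a p\<bar>) = a" unfolding a_def by auto
  have iabs: "(\<lambda>p. \<bar>a p\<bar>) integrable_on {0..1}" unfolding aabs by (rule ia)
  have Gam: "(\<lambda>p. \<Gamma> p s) \<in> borel_measurable (lebesgue_on {0..1})" for s
  proof (rule antimono_bm)
    fix u v :: real assume "u \<in> {0..1}" "v \<in> {0..1}" "u \<le> v"
    then have "qinv G u \<le> qinv G v" using qinv_mono[OF pG] by auto
    then show "\<Gamma> v s \<le> \<Gamma> u s" unfolding \<Gamma>_def step_def by auto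
  qed
  have iG: "(\<lambda>p. a p * \<Gamma> p s) integrable_on {0..1}" for s
  proof -
    have m: "(\<lambda>p. a p * \<Gamma> p s) \<in> borel_measurable (lebesgue_on {0..1})"
      by (rule borel_measurable_times[OF mono_bm[OF am] Gam])
    have "(\<lambda>p. 1 * (a p * \<Gamma> p s)) integrable_on {0..1}"
      by (rule int_bm_cont[OF m, where B=1]) (auto simp: a_def \<Gamma>_def step_def)
    then show ?thesis by simp
  qed
  have xGe: "\<And>p. p \<in> {0..1} \<Longrightarrow> a p * qinv G p = a p * xG \<Gamma> p"
    unfolding xG_def \<Gamma>_def using cdf_mean_step qr by simp
  have aq: "(\<lambda>p. a p * qinv G p) = (\<lambda>p. if p \<in> {q..} then qinv G p else 0)" unfolding a_def by auto
  have iaq: "(\<lambda>p. a p * qinv G p) integrable_on {0..1}"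
  proof -
    have h: "(qinv G has_integral integral {q..1} (qinv G)) {q..1}"
      using qinv_int[OF pG, of q 1] q by (simp add: integrable_integral)
    have eqset: "{q..} \<inter> {0..1} = {q..1::real}" using q by auto
    have "((\<lambda>p. if p \<in> {q..} then qinv G p else 0) has_integral integral {q..1} (qinv G)) {0..1}"
      unfolding has_integral_restrict_Int eqset by (rule h)
    then show ?thesis unfolding aq by blast
  qed
  have im: "(\<lambda>p. a p * xG \<Gamma> p) integrable_on {0..1}" by (rule integrable_eq[OF iaq xGe])
  note ex = exch[OF cdf ia iabs iG im n]
  have e1: "integral {0..1} (\<lambda>p. a p * xG \<Gamma> p) = Qf G q"
  proof -
    have "integral {0..1} (\<lambda>p. a p * xG \<Gamma> p) = integral {0..1} (\<lambda>p. a p * qinv G p)"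
      by (rule integral_cong) (rule sym, erule xGe)
    also have "\<dots> = integral ({q..} \<inter> {0..1}) (qinv G)" unfolding aq by (rule integral_restrict_Int)
    also have "{q..} \<inter> {0..1} = {q..1::real}" using q by auto
    finally show ?thesis unfolding Qf_def .
  qed
  have ind: "integral {0..1} (\<lambda>p. if p \<in> {u..v} then 1 else 0 :: real) = max 0 (v - u)"
    if "0 \<le> u" "v \<le> 1" for u v
  proof -
    have "integral {0..1} (\<lambda>p. if p \<in> {u..v} then 1 else 0 :: real) = integral ({u..v} \<inter> {0..1}) (\<lambda>_. 1::real)"
      by (rule integral_restrict_Int)
    also have "{u..v} \<inter> {0..1} = {u..v}" using that by auto
    finally show ?thesis by simp
  qed
  have e2: "integral {0..1} a = 1 - q"
  proof -
    have "integral {0..1} a = integral {0..1} (\<lambda>p. if p \<in> {q..1} then 1 else 0 :: real)"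
      by (rule integral_cong) (auto simp: a_def)
    also have "\<dots> = max 0 (1 - q)" by (rule ind) (use q in auto)
    finally show ?thesis using q by simp
  qed
  have e3: "integral {0..1} (\<lambda>p. a p * \<Gamma> p (real (Suc k) / real n)) = max 0 (G (real (Suc k) / real n) - q)"
    if k: "k \<in> {..<n}" for k
  proof -
    let ?s = "real (Suc k) / real n"
    have s: "?s \<in> {0..1}" using k n by auto
    have "integral {0..1} (\<lambda>p. a p * \<Gamma> p ?s) = integral {0..1} (\<lambda>p. if p \<in> {q..G ?s} then 1 else 0)"
    proof (rule integral_cong)
      fix p :: real assume p: "p \<in> {0..1}"
      have "\<Gamma> p ?s = (if p \<le> G ?s then 1 else 0)"
        unfolding \<Gamma>_def step_def using qinv_le_iff[OF pG _ s, of p] p by auto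
      then show "a p * \<Gamma> p ?s = (if p \<in> {q..G ?s} then 1 else 0)" unfolding a_def by auto
    qed
    also have "\<dots> = max 0 (G ?s - q)" by (rule ind) (use q prizeD(5)[OF pG] in auto)
    finally show ?thesis .
  qed
  have sumeq: "(\<Sum>k<n. max q (G (real (Suc k) / real n))) = real n * q + (\<Sum>k<n. max 0 (G (real (Suc k) / real n) - q))"
  proof -
    have "(\<Sum>k<n. max q (G (real (Suc k) / real n))) = (\<Sum>k<n. q + max 0 (G (real (Suc k) / real n) - q))"
      by (rule sum.cong) (auto simp: max_def)
    then show ?thesis by (simp add: sum.distrib)
  qed
  have se: "(\<Sum>k<n. integral {0..1} (\<lambda>p. a p * \<Gamma> p (real (Suc k) / real n)))
     = (\<Sum>k<n. max 0 (G (real (Suc k) / real n) - q))" by (rule sum.cong[OF refl e3])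
  have A: "\<bar>Qf G q - (1 - q - (\<Sum>k<n. max 0 (G (real (Suc k) / real n) - q)) / real n)\<bar> \<le> (1 - q) / real n"
    using ex unfolding e1 aabs e2 se .
  have B: "1 - q - (\<Sum>k<n. max 0 (G (real (Suc k) / real n) - q)) / real n = An G q n"
  proof -
    have "An G q n = 1 - (real n * q + (\<Sum>k<n. max 0 (G (real (Suc k) / real n) - q))) / real n"
      unfolding An_def sumeq ..
    also have "\<dots> = 1 - q - (\<Sum>k<n. max 0 (G (real (Suc k) / real n) - q)) / real n"
      using n by (simp add: add_divide_distrib)
    finally show ?thesis by simp
  qed
  have C: "(1 - q) / real n \<le> 1 / real n" using q n by (simp add: divide_right_mono)
  from A have "\<bar>Qf G q - An G q n\<bar> \<le> (1 - q) / real n" unfolding B .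
  with C show ?thesis by linarith
qed

definition ts0 :: "(real \<Rightarrow> real) \<Rightarrow> (real \<Rightarrow> real) \<Rightarrow> real" where
  "ts0 F f = Sup ({0} \<union> {\<theta>\<in>{0<..<1}. vv F f \<theta> < 0})"

definition Rr :: "(real \<Rightarrow> real) \<Rightarrow> (real \<Rightarrow> real) \<Rightarrow> (real \<Rightarrow> real) \<Rightarrow> real \<Rightarrow> real" where
  "Rr F f G t = EF f (xstar F G t)"

definition Wr :: "(real \<Rightarrow> real) \<Rightarrow> (real \<Rightarrow> real) \<Rightarrow> (real \<Rightarrow> real) \<Rightarrow> real \<Rightarrow> real" where
  "Wr F f G t = integral {0..1} (\<lambda>\<theta>. ww F f \<theta> * xstar F G t \<theta>)"

definition Sm :: "(real \<Rightarrow> real) \<Rightarrow> (real \<Rightarrow> real) \<Rightarrow> (real \<Rightarrow> real) \<Rightarrow> real \<Rightarrow> real set" where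
  "Sm F f G m = {t\<in>{0..ts0 F f}. m \<le> Rr F f G t}"

definition tsf :: "(real \<Rightarrow> real) \<Rightarrow> (real \<Rightarrow> real) \<Rightarrow> (real \<Rightarrow> real) \<Rightarrow> real \<Rightarrow> real" where
  "tsf F f G m = (if m = cdf_mean G then 0 else Sup (Sm F f G m))"

lemma ts0_props:
  assumes mr: "myerson_regular F f"
  shows "0 \<le> ts0 F f" "ts0 F f \<le> 1" "Hyp F f 0 (ts0 F f)"
proof -
  let ?S = "{0} \<union> {\<theta>\<in>{0<..<1}. vv F f \<theta> < 0}"
  have ne: "?S \<noteq> {}" by simp
  have bdd: "bdd_above ?S" by (rule bdd_aboveI[of _ 1]) auto
  show z: "0 \<le> ts0 F f" unfolding ts0_def by (rule cSup_upper[OF _ bdd]) simp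
  show o: "ts0 F f \<le> 1" unfolding ts0_def by (rule cSup_least[OF ne]) auto
  have lo: "vv F f \<theta> \<le> 0" if th: "\<theta> \<in> {0<..<1}" "\<theta> < ts0 F f" for \<theta>
  proof -
    obtain y where y: "y \<in> ?S" "\<theta> < y" using th(2) less_cSup_iff[OF ne bdd] unfolding ts0_def by blast
    then have "y \<in> {0<..<1}" "vv F f y < 0" using th(1) by auto
    then show ?thesis using vv_mono[OF mr th(1) \<open>y \<in> {0<..<1}\<close>] y(2) by simp
  qed
  have hi: "0 \<le> vv F f \<theta>" if th: "\<theta> \<in> {0<..<1}" "ts0 F f < \<theta>" for \<theta>
  proof (rule ccontr)
    assume "\<not> 0 \<le> vv F f \<theta>"
    then have "\<theta> \<in> ?S" using th by auto
    then have "\<theta> \<le> ts0 F f" unfolding ts0_def by (rule cSup_upper[OF _ bdd])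
    then show False using th by simp
  qed
  show "Hyp F f 0 (ts0 F f)" unfolding Hyp_def using z o lo hi by auto
qed

lemma Hyp_at:
  assumes mr: "myerson_regular F f" and t: "t \<in> {0<..<1}" and v: "vv F f t \<le> 0"
  shows "Hyp F f (- vv F f t) t"
  unfolding Hyp_def using v t vv_mono[OF mr _ t] vv_mono[OF mr t] by force

lemma R_eq:
  assumes td: "type_dist F f" and pG: "prize_dist G" and t: "t \<in> {0..1}"
  shows "Rr F f G t = Qf G (F t)"
  unfolding Rr_def
  by (rule approx_eq[where c="An G (F t)"]) (use R_approx[OF td pG t] Q_approx[OF pG] F_range[OF td] t in auto)

lemma mean_eq:
  assumes pG: "prize_dist G"
  shows "cdf_mean G = Qf G 0"
proof (rule approx_eq[where c="An G 0"])
  fix n :: nat assume n: "n > 0"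
  show "\<bar>Qf G 0 - An G 0 n\<bar> \<le> 1 / real n" using Q_approx[OF pG _ n] by simp
  have "An G 0 n = 1 - Dn n G" unfolding An_def Dn_def using prizeD(4)[OF pG] by simp
  then show "\<bar>cdf_mean G - An G 0 n\<bar> \<le> 1 / real n" using cdf_mean_bounds[OF prizeD(1)[OF pG] n] by simp
qed

lemma R0:
  assumes td: "type_dist F f" and pG: "prize_dist G"
  shows "Rr F f G 0 = cdf_mean G"
  using R_eq[OF td pG, of 0] mean_eq[OF pG] typeD(1)[OF td] by simp

lemma R_lip:
  assumes td: "type_dist F f" and pG: "prize_dist G" and M: "\<And>\<theta>. \<theta> \<in> {0..1} \<Longrightarrow> \<bar>f \<theta>\<bar> \<le> M"
    and t: "0 \<le> t1" "t1 \<le> t2" "t2 \<le> 1"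
  shows "Rr F f G t2 \<le> Rr F f G t1" "Rr F f G t1 - Rr F f G t2 \<le> M * (t2 - t1)"
proof -
  have Fm: "0 \<le> F t1" "F t1 \<le> F t2" "F t2 \<le> 1" using F_mono[OF td t] F_range[OF td, of t1] F_range[OF td, of t2] t by auto
  have e: "Rr F f G t1 = Qf G (F t1)" "Rr F f G t2 = Qf G (F t2)" using R_eq[OF td pG] t by auto
  show "Rr F f G t2 \<le> Rr F f G t1" using Q_diff(1)[OF pG Fm] e by simp
  show "Rr F f G t1 - Rr F f G t2 \<le> M * (t2 - t1)" using Q_diff(2)[OF pG Fm] e F_lip[OF td M t] by simp
qed

lemma R_nn:
  assumes td: "type_dist F f" and pG: "prize_dist G" and t: "t \<in> {0..1}"
  shows "0 \<le> Rr F f G t"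
proof -
  have "0 \<le> Qf G (F t)" unfolding Qf_def
    by (rule integral_nonneg[OF qinv_int[OF pG]]) (use F_range[OF td, of t] t qinv_range[OF pG] in auto)
  then show ?thesis using R_eq[OF td pG t] by simp
qed

lemma W_lip:
  assumes td: "type_dist F f" and pG: "prize_dist G"
  obtains Mw where "\<And>t. t \<in> {0..1} \<Longrightarrow> Wr F f G t \<le> Wr F f G 0 + Mw * t"
proof -
  have "compact (ww F f ` {0..1})" using ww_cont[OF td] compact_continuous_image compact_Icc by blast
  then obtain Mw where Mw: "\<forall>y\<in>ww F f ` {0..1}. norm y \<le> Mw" using compact_imp_bounded bounded_iff by metis
  then have Mb: "\<And>\<theta>. \<theta> \<in> {0..1} \<Longrightarrow> \<bar>ww F f \<theta>\<bar> \<le> Mw" by (metis image_eqI real_norm_def)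
  have Mw0: "0 \<le> Mw" using abs_ge_zero[of "ww F f 0"] Mb[of 0] by simp
  have "Wr F f G t \<le> Wr F f G 0 + Mw * t" if t: "t \<in> {0..1}" for t
  proof -
    let ?d = "\<lambda>\<theta>. ww F f \<theta> * xstar F G t \<theta> - ww F f \<theta> * xstar F G 0 \<theta>"
    have i1: "(\<lambda>\<theta>. ww F f \<theta> * xstar F G t \<theta>) integrable_on {0..1}" by (rule int_mono[OF xstar_mono[OF td pG] ww_cont[OF td]])
    have i0: "(\<lambda>\<theta>. ww F f \<theta> * xstar F G 0 \<theta>) integrable_on {0..1}" by (rule int_mono[OF xstar_mono[OF td pG] ww_cont[OF td]])
    have ib: "((\<lambda>\<theta>. if \<theta> \<in> {0..t} then Mw else 0) has_integral Mw * t) {0..1}"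
    proof -
      have eqs: "{0..t} \<inter> {0..1} = {0..t}" using t by auto
      have h: "((\<lambda>_. Mw) has_integral Mw * t) {0..t}" using has_integral_const_real[of Mw 0 t] t by (simp add: mult.commute)
      show ?thesis unfolding has_integral_restrict_Int eqs by (rule h)
    qed
    have bnd: "norm (?d \<theta>) \<le> (if \<theta> \<in> {0..t} then Mw else 0)" if th: "\<theta> \<in> {0..1}" for \<theta>
    proof (cases "\<theta> < t")
      case True
      have "\<bar>ww F f \<theta>\<bar> * \<bar>qinv G (F \<theta>)\<bar> \<le> Mw * 1"
        using Mb[OF th] qinv_range[OF pG, of "F \<theta>"] F_range[OF td, of \<theta>] th
        by (intro mult_mono) auto
      then show ?thesis using True th typeD(1)[OF td] by (auto simp: xstar_def abs_mult)
    next
      case False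
      then have "\<not> \<theta> < 0" using t by auto
      then show ?thesis using False th Mw0 by (auto simp: xstar_def)
    qed
    have "norm (integral {0..1} ?d) \<le> integral {0..1} (\<lambda>\<theta>. if \<theta> \<in> {0..t} then Mw else 0)"
      by (rule integral_norm_bound_integral[OF integrable_diff[OF i1 i0] _ bnd]) (use ib in blast)
    moreover have "integral {0..1} ?d = Wr F f G t - Wr F f G 0" unfolding Wr_def by (rule integral_diff[OF i1 i0])
    ultimately show ?thesis using ib by (simp add: integral_unique)
  qed
  then show ?thesis by (rule that)
qed

lemma Sm_facts:
  assumes td: "type_dist F f" and mr: "myerson_regular F f" and pG: "prize_dist G"
    and m: "0 \<le> m" "m < cdf_mean G"
  shows "Sup (Sm F f G m) \<in> {0..ts0 F f}" "m \<le> Rr F f G (Sup (Sm F f G m))"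
    "Sup (Sm F f G m) < ts0 F f \<Longrightarrow> Rr F f G (Sup (Sm F f G m)) = m"
proof -
  obtain M where M: "M > 0" "\<And>\<theta>. \<theta> \<in> {0..1} \<Longrightarrow> \<bar>f \<theta>\<bar> \<le> M" using f_bound[OF td] by blast
  let ?S = "Sm F f G m" and ?R = "Rr F f G" and ?T = "Sup (Sm F f G m)"
  have t0: "0 \<le> ts0 F f" "ts0 F f \<le> 1" using ts0_props[OF mr] by auto
  have R0': "?R 0 = cdf_mean G" by (rule R0[OF td pG])
  have z: "0 \<in> ?S" unfolding Sm_def using t0 R0' m by auto
  have ne: "?S \<noteq> {}" using z by blast
  have bdd: "bdd_above ?S" unfolding Sm_def by (rule bdd_aboveI[of _ "ts0 F f"]) auto
  have T0: "0 \<le> ?T" by (rule cSup_upper[OF z bdd])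
  have T1: "?T \<le> ts0 F f" by (rule cSup_least[OF ne]) (auto simp: Sm_def)
  show "?T \<in> {0..ts0 F f}" using T0 T1 by auto
  have Rl: "?R t1 - ?R t2 \<le> M * (t2 - t1)" "?R t2 \<le> ?R t1" if "0 \<le> t1" "t1 \<le> t2" "t2 \<le> 1" for t1 t2
    using R_lip[OF td pG M(2) that] by auto
  show ge: "m \<le> ?R ?T"
  proof (rule ccontr)
    assume "\<not> m \<le> ?R ?T"
    then have eps: "m - ?R ?T > 0" by simp
    define \<delta> where "\<delta> = (m - ?R ?T) / M"
    have d: "\<delta> > 0" unfolding \<delta>_def using eps M(1) by simp
    obtain y where y: "y \<in> ?S" "?T - \<delta> < y" using less_cSup_iff[OF ne bdd, of "?T - \<delta>"] d by auto
    have yT: "y \<le> ?T" by (rule cSup_upper[OF y(1) bdd])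
    have y0: "0 \<le> y" using y(1) unfolding Sm_def by auto
    have "?R y - ?R ?T \<le> M * (?T - y)" using Rl(1)[OF y0 yT] T1 t0 by simp
    also have "M * (?T - y) < M * \<delta>" using y(2) M(1) by simp
    also have "M * \<delta> = m - ?R ?T" unfolding \<delta>_def using M(1) by simp
    finally have "?R y < m" by simp
    moreover have "m \<le> ?R y" using y(1) unfolding Sm_def by auto
    ultimately show False by simp
  qed
  assume lt: "?T < ts0 F f"
  show "?R ?T = m"
  proof (rule ccontr)
    assume "?R ?T \<noteq> m"
    then have eps: "?R ?T - m > 0" using ge by simp
    define y where "y = min (ts0 F f) (?T + (?R ?T - m) / (2 * M))"
    have yT: "?T < y" unfolding y_def using lt eps M(1) by simp
    have y1: "y \<le> ts0 F f" "0 \<le> y" unfolding y_def using T0 eps M(1) lt by auto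
    have "?R ?T - ?R y \<le> M * (y - ?T)" using Rl(1)[of ?T y] T0 yT y1 t0 by simp
    also have "\<dots> \<le> M * ((?R ?T - m) / (2 * M))"
      using M(1) unfolding y_def by (intro mult_left_mono) auto
    also have "\<dots> = (?R ?T - m) / 2" using M(1) by simp
    finally have "m \<le> ?R y" using eps by simp
    then have "y \<in> ?S" unfolding Sm_def using y1 by auto
    then have "y \<le> ?T" by (rule cSup_upper[OF _ bdd])
    then show False using yT by simp
  qed
qed

lemma tsf_range:
  assumes td: "type_dist F f" and mr: "myerson_regular F f" and pG: "prize_dist G"
    and m: "0 \<le> m" "m \<le> cdf_mean G"
  shows "tsf F f G m \<in> {0..ts0 F f}"
proof (cases "m = cdf_mean G")
  case True then show ?thesis using ts0_props[OF mr] by (simp add: tsf_def)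
next
  case False then show ?thesis using Sm_facts(1)[OF td mr pG m(1)] m by (simp add: tsf_def)
qed

lemma opt_m:
  assumes td: "type_dist F f" and mr: "myerson_regular F f" and pG: "prize_dist G"
    and m: "0 \<le> m" "m \<le> cdf_mean G" and fe: "feasible f G m \<Gamma> t'"
  shows "EF f t' \<le> Wr F f G (tsf F f G m)"
proof -
  have t0: "0 \<le> ts0 F f" "ts0 F f \<le> 1" and H0: "Hyp F f 0 (ts0 F f)" using ts0_props[OF mr] by auto
  have R0': "Rr F f G 0 = cdf_mean G" by (rule R0[OF td pG])
  have vneg: "vv F f t \<le> 0" if "t \<in> {0<..<1}" "t < ts0 F f" for t
    using H0 that unfolding Hyp_def by auto
  show ?thesis
  proof (cases "m = cdf_mean G")
    case mT: True
    then have ts: "tsf F f G m = 0" by (simp add: tsf_def)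
    show ?thesis
    proof (cases "ts0 F f = 0")
      case True
      then show ?thesis using opt[OF td mr pG _ fe, of 0 "ts0 F f"] H0 ts unfolding Wr_def by simp
    next
      case False
      then have tp: "ts0 F f > 0" using t0 by simp
      obtain Mw where Mw: "\<And>t. t \<in> {0..1} \<Longrightarrow> Wr F f G t \<le> Wr F f G 0 + Mw * t" using W_lip[OF td pG] by blast
      have "EF f t' \<le> Wr F f G 0"
      proof (rule lim_le[where c="Mw * ts0 F f / 2"])
        fix n :: nat assume n: "n > 0"
        define t where "t = ts0 F f / (2 * real n)"
        have tpos: "0 < t" unfolding t_def using tp n by simp
        have n1: "1 \<le> real n" using n by simp
        have "t \<le> ts0 F f / 2" unfolding t_def by (rule frac_le) (use tp n1 in auto)
        then have tlt: "t < ts0 F f" using tp by simp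
        have tin: "t \<in> {0<..<1}" using tpos tlt t0 by auto
        have Ht: "Hyp F f (- vv F f t) t" by (rule Hyp_at[OF mr tin vneg[OF tin tlt]])
        have "EF f t' \<le> Wr F f G t + (- vv F f t) * (Rr F f G t - m)"
          using opt[OF td mr pG Ht fe] unfolding Wr_def Rr_def .
        moreover have "Rr F f G t \<le> Rr F f G 0"
        proof -
          obtain M where M: "M > 0" "\<And>\<theta>. \<theta> \<in> {0..1} \<Longrightarrow> \<bar>f \<theta>\<bar> \<le> M" using f_bound[OF td] by blast
          have "0 \<le> (0::real)" "0 \<le> t" "t \<le> 1" using tin by auto
          from R_lip(1)[OF td pG M(2) this] show ?thesis .
        qed
        then have "(- vv F f t) * (Rr F f G t - m) \<le> 0"
          using vneg[OF tin tlt] R0' mT by (intro mult_nonneg_nonpos) auto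
        moreover have "Wr F f G t \<le> Wr F f G 0 + Mw * t" using Mw tin by auto
        moreover have "Mw * t = Mw * ts0 F f / 2 / real n" unfolding t_def by simp
        ultimately show "EF f t' \<le> Wr F f G 0 + Mw * ts0 F f / 2 / real n" by linarith
      qed
      then show ?thesis using ts by simp
    qed
  next
    case False
    then have mlt: "m < cdf_mean G" using m by simp
    let ?T = "Sup (Sm F f G m)"
    have ts: "tsf F f G m = ?T" using False by (simp add: tsf_def)
    note SF = Sm_facts[OF td mr pG m(1) mlt]
    show ?thesis
    proof (cases "?T = ts0 F f")
      case True
      then show ?thesis using opt[OF td mr pG H0 fe] ts unfolding Wr_def by simp
    next
      case False
      then have lt: "?T < ts0 F f" using SF(1) by simp
      have RT: "Rr F f G ?T = m" by (rule SF(3)[OF lt])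
      have "?T \<noteq> 0" using RT R0' mlt by auto
      then have tin: "?T \<in> {0<..<1}" using SF(1) lt t0 by auto
      have Ht: "Hyp F f (- vv F f ?T) ?T" by (rule Hyp_at[OF mr tin vneg[OF tin lt]])
      show ?thesis using opt[OF td mr pG Ht fe] RT ts unfolding Wr_def Rr_def by simp
    qed
  qed
qed

theorem proposition5:
  fixes F f G :: "real \<Rightarrow> real"
  assumes "type_dist F f"
    and "prize_dist G"
    and "myerson_regular F f"
  shows "\<exists>ts :: real \<Rightarrow> real.
     (\<forall>m\<in>{0..cdf_mean G}. ts m \<in> {0..1} \<and>
        (\<exists>\<Gamma> t. feasible f G m \<Gamma> t
           \<and> (\<forall>\<theta>\<in>{0..1}. xG \<Gamma> \<theta> = xstar F G (ts m) \<theta>)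
           \<and> (\<forall>\<Gamma>' t'. feasible f G m \<Gamma>' t' \<longrightarrow> EF f t' \<le> EF f t)))
   \<and> ts (cdf_mean G) = 0
   \<and> (\<forall>m1\<in>{0..cdf_mean G}. \<forall>m2\<in>{0..cdf_mean G}. m1 \<le> m2 \<longrightarrow> ts m2 \<le> ts m1)
   \<and> (\<forall>m\<in>{0..cdf_mean G}. I_Ginv G (F (ts 0)) > - m \<longrightarrow>
        EF f (xstar F G (ts m)) = m)"
proof -
  note td = assms(1) and pG = assms(2) and mr = assms(3)
  let ?ts = "tsf F f G"
  have t0: "0 \<le> ts0 F f" "ts0 F f \<le> 1" using ts0_props[OF mr] by auto
  have R0': "Rr F f G 0 = cdf_mean G" by (rule R0[OF td pG])
  have rng: "?ts m \<in> {0..1}" if "m \<in> {0..cdf_mean G}" for m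
  proof -
    have "?ts m \<in> {0..ts0 F f}" using tsf_range[OF td mr pG, of m] that by auto
    then show ?thesis using t0 by auto
  qed
  have feasR: "m \<le> Rr F f G (?ts m)" if m: "m \<in> {0..cdf_mean G}" for m
  proof (cases "m = cdf_mean G")
    case True then show ?thesis using R0' by (simp add: tsf_def)
  next
    case False
    then have "0 \<le> m" "m < cdf_mean G" using m by auto
    from Sm_facts(2)[OF td mr pG this] show ?thesis using False by (simp add: tsf_def)
  qed
  have C1: "\<forall>m\<in>{0..cdf_mean G}. ?ts m \<in> {0..1} \<and>
        (\<exists>\<Gamma> t. feasible f G m \<Gamma> t
           \<and> (\<forall>\<theta>\<in>{0..1}. xG \<Gamma> \<theta> = xstar F G (?ts m) \<theta>)
           \<and> (\<forall>\<Gamma>' t'. feasible f G m \<Gamma>' t' \<longrightarrow> EF f t' \<le> EF f t))"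
  proof
    fix m assume m: "m \<in> {0..cdf_mean G}"
    show "?ts m \<in> {0..1} \<and>
        (\<exists>\<Gamma> t. feasible f G m \<Gamma> t
           \<and> (\<forall>\<theta>\<in>{0..1}. xG \<Gamma> \<theta> = xstar F G (?ts m) \<theta>)
           \<and> (\<forall>\<Gamma>' t'. feasible f G m \<Gamma>' t' \<longrightarrow> EF f t' \<le> EF f t))"
    proof (intro conjI exI)
      show r: "?ts m \<in> {0..1}" by (rule rng[OF m])
      show "feasible f G m (Gst F G (?ts m)) (tst F G (?ts m))"
        by (rule feasible_star[OF td pG r]) (use feasR[OF m] in \<open>simp add: Rr_def\<close>)
      show "\<forall>\<theta>\<in>{0..1}. xG (Gst F G (?ts m)) \<theta> = xstar F G (?ts m) \<theta>"
        using Gst_cdf(2)[OF td pG] by blast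
      show "\<forall>\<Gamma>' t'. feasible f G m \<Gamma>' t' \<longrightarrow> EF f t' \<le> EF f (tst F G (?ts m))"
      proof (intro allI impI)
        fix \<Gamma>' t' assume fe: "feasible f G m \<Gamma>' t'"
        have m0: "0 \<le> m" "m \<le> cdf_mean G" using m by auto
        have "EF f t' \<le> Wr F f G (?ts m)" by (rule opt_m[OF td mr pG m0 fe])
        also have "Wr F f G (?ts m) = EF f (tst F G (?ts m))" unfolding Wr_def by (rule revenue_star[OF td pG, symmetric])
        finally show "EF f t' \<le> EF f (tst F G (?ts m))" .
      qed
    qed
  qed
  have C2: "?ts (cdf_mean G) = 0" by (simp add: tsf_def)
  have C3: "\<forall>m1\<in>{0..cdf_mean G}. \<forall>m2\<in>{0..cdf_mean G}. m1 \<le> m2 \<longrightarrow> ?ts m2 \<le> ?ts m1"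
  proof (intro ballI impI)
    fix m1 m2 assume m1: "m1 \<in> {0..cdf_mean G}" and m2: "m2 \<in> {0..cdf_mean G}" and le: "m1 \<le> m2"
    show "?ts m2 \<le> ?ts m1"
    proof (cases "m2 = cdf_mean G")
      case True then show ?thesis using rng[OF m1] by (simp add: tsf_def)
    next
      case False
      then have m1n: "m1 \<noteq> cdf_mean G" using m1 m2 le by auto
      have z: "0 \<in> Sm F f G m2" unfolding Sm_def using t0 R0' m2 by auto
      have bdd: "bdd_above (Sm F f G m1)" unfolding Sm_def by (rule bdd_aboveI[of _ "ts0 F f"]) auto
      have sub: "Sm F f G m2 \<subseteq> Sm F f G m1" unfolding Sm_def using le by auto
      have "Sup (Sm F f G m2) \<le> Sup (Sm F f G m1)" by (rule cSup_subset_mono[OF _ bdd sub]) (use z in blast)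
      then show ?thesis using False m1n by (simp add: tsf_def)
    qed
  qed
  have C4: "\<forall>m\<in>{0..cdf_mean G}. I_Ginv G (F (?ts 0)) > - m \<longrightarrow> EF f (xstar F G (?ts m)) = m"
  proof (intro ballI impI)
    fix m assume m: "m \<in> {0..cdf_mean G}" and cond: "I_Ginv G (F (?ts 0)) > - m"
    show "EF f (xstar F G (?ts m)) = m"
    proof (cases "m = cdf_mean G")
      case True
      then show ?thesis using R0' by (simp add: tsf_def Rr_def)
    next
      case mF: False
      then have mlt: "m < cdf_mean G" using m by simp
      then have mean0: "cdf_mean G \<noteq> 0" using m by auto
      have Seq: "Sm F f G 0 = {0..ts0 F f}"
      proof (rule set_eqI)
        fix t :: real
        show "t \<in> Sm F f G 0 \<longleftrightarrow> t \<in> {0..ts0 F f}"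
        proof
          assume "t \<in> {0..ts0 F f}"
          then have "t \<in> {0..1}" using t0 by auto
          then have "0 \<le> Rr F f G t" by (rule R_nn[OF td pG])
          then show "t \<in> Sm F f G 0" using \<open>t \<in> {0..ts0 F f}\<close> unfolding Sm_def by simp
        qed (simp add: Sm_def)
      qed
      have "?ts 0 = Sup {0..ts0 F f}" using mean0 unfolding tsf_def Seq by simp
      then have ts00: "?ts 0 = ts0 F f" using t0 by simp
      have "I_Ginv G (F (ts0 F f)) = - Rr F f G (ts0 F f)"
        using I_Ginv_eq[OF pG, of "F (ts0 F f)"] R_eq[OF td pG, of "ts0 F f"] F_range[OF td, of "ts0 F f"] t0 by simp
      then have Rlt: "Rr F f G (ts0 F f) < m" using cond ts00 by simp
      let ?T = "Sup (Sm F f G m)"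
      have m0: "0 \<le> m" using m by simp
      note SF = Sm_facts[OF td mr pG m0 mlt]
      have ts: "?ts m = ?T" using mF by (simp add: tsf_def)
      have "?T \<noteq> ts0 F f"
      proof
        assume "?T = ts0 F f"
        then have "m \<le> Rr F f G (ts0 F f)" using SF(2) by simp
        then show False using Rlt by simp
      qed
      then have "?T < ts0 F f" using SF(1) by simp
      then have "Rr F f G ?T = m" by (rule SF(3))
      then show ?thesis using ts by (simp add: Rr_def)
    qed
  qed
  show ?thesis by (rule exI[of _ ?ts], intro conjI, fact C1, fact C2, fact C3, fact C4)
qed

end
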